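(* Let $G$ be a locally finite connected graph with a cofinite free $\mathbb Z^d$-symmetry, with quotient graph $\overline G$ having vertex set $\overline V$ and edge set $\overline E$. Then $$m(\Delta_0)\le|\overline V|\log\frac{2|\overline E|}{|\overline V|}.$$
   Context: $\mathbb Z^d=\langle x_1,\dots,x_d\rangle$ acts freely on $G$ by automorphisms with finite quotient $\overline G$ with vertices $v_1,\dots,v_n$, lifted to $v_{i,\mathbf 0}$, $v_{i,\mathbf s}=x_1^{s_1}\cdots x_d^{s_d}v_{i,\mathbf 0}$. The Laplacian matrix is $L=D-A$ over $\mathbb Z[x_1^{\pm1},\dots,x_d^{\pm1}]$, with $D$ the diagonal degree matrix (loops counted twice) and $A_{ij}$ the sum of $x_1^{s_1}\cdots x_d^{s_d}$ over edges of $G$ from $v_{i,\mathbf 0}$ to $v_{j,\mathbf s}$; $\Delta_0=\det L$. The logarithmic Mahler measure is $m(f)=\int_{[0,1]^d}\log|f(e^{2\pi i\theta_1},\dots,e^{2\pi i\theta_d})|\,d\theta$. *)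

theory Defs
  imports "HOL-Analysis.Analysis"
begin

text \<open>A (multi)graph G: vertex type 'v (all of it), edge type 'e, each edge e has
  endpoints ends e (orientation irrelevant; a loop has both endpoints equal).\<close>

definition endpoint :: "('e \<Rightarrow> 'v \<times> 'v) \<Rightarrow> 'v \<Rightarrow> 'e \<Rightarrow> bool" where
  "endpoint ends v e \<longleftrightarrow> fst (ends e) = v \<or> snd (ends e) = v"

definition adjacent :: "('e \<Rightarrow> 'v \<times> 'v) \<Rightarrow> 'v \<Rightarrow> 'v \<Rightarrow> bool" where
  "adjacent ends u v \<longleftrightarrow> (\<exists>e. ends e = (u, v) \<or> ends e = (v, u))"

definition locally_finite :: "('e \<Rightarrow> 'v \<times> 'v) \<Rightarrow> bool" where
  "locally_finite ends \<longleftrightarrow> (\<forall>v. finite {e. endpoint ends v e})"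

definition graph_connected :: "('e \<Rightarrow> 'v \<times> 'v) \<Rightarrow> bool" where
  "graph_connected ends \<longleftrightarrow> (\<forall>u v. (adjacent ends)\<^sup>*\<^sup>* u v)"

definition group_action :: "(int ^ 'd \<Rightarrow> 'a \<Rightarrow> 'a) \<Rightarrow> bool" where
  "group_action act \<longleftrightarrow> act 0 = id \<and> (\<forall>s t. act (s + t) = act s \<circ> act t)"

definition free_action :: "(int ^ 'd \<Rightarrow> 'a \<Rightarrow> 'a) \<Rightarrow> bool" where
  "free_action act \<longleftrightarrow> group_action act \<and> (\<forall>s x. act s x = x \<longrightarrow> s = 0)"

definition acts_by_automorphisms ::
  "('e \<Rightarrow> 'v \<times> 'v) \<Rightarrow> (int ^ 'd \<Rightarrow> 'v \<Rightarrow> 'v) \<Rightarrow> (int ^ 'd \<Rightarrow> 'e \<Rightarrow> 'e) \<Rightarrow> bool" where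
  "acts_by_automorphisms ends act acte \<longleftrightarrow>
     (\<forall>s e. ends (acte s e) = (act s (fst (ends e)), act s (snd (ends e)))
          \<or> ends (acte s e) = (act s (snd (ends e)), act s (fst (ends e))))"

definition orbit :: "(int ^ 'd \<Rightarrow> 'a \<Rightarrow> 'a) \<Rightarrow> 'a \<Rightarrow> 'a set" where
  "orbit act x = range (\<lambda>s. act s x)"

text \<open>Vertex set and edge set of the quotient graph G / Z^d.\<close>
definition quot :: "(int ^ 'd \<Rightarrow> 'a \<Rightarrow> 'a) \<Rightarrow> 'a set set" where
  "quot act = range (orbit act)"

definition Zd_periodic_graph ::
  "('e \<Rightarrow> 'v \<times> 'v) \<Rightarrow> (int ^ 'd \<Rightarrow> 'v \<Rightarrow> 'v) \<Rightarrow> (int ^ 'd \<Rightarrow> 'e \<Rightarrow> 'e) \<Rightarrow> bool" where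
  "Zd_periodic_graph ends act acte \<longleftrightarrow>
     free_action act \<and> free_action acte \<and> acts_by_automorphisms ends act acte
     \<and> finite (quot act) \<and> finite (quot acte)"

definition monom_eval :: "complex ^ 'd \<Rightarrow> int ^ 'd \<Rightarrow> complex" where
  "monom_eval z s = (\<Prod>k\<in>UNIV. (z $ k) powi (s $ k))"

text \<open>Degree with loops counted twice.\<close>
definition degree_G :: "('e \<Rightarrow> 'v \<times> 'v) \<Rightarrow> 'v \<Rightarrow> nat" where
  "degree_G ends v = card {e. fst (ends e) = v} + card {e. snd (ends e) = v}"

text \<open>Entry A_ij evaluated at z: sum over edges from v_{i,0} to v_{j,s} of x^s, where
  r i is the chosen lift v_{i,0}.  Edges are counted via their ends at v_{i,0}
  (so a loop at v_{i,0} is counted twice, consistent with the degree).\<close>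
definition adj_entry ::
  "('e \<Rightarrow> 'v \<times> 'v) \<Rightarrow> (int ^ 'd \<Rightarrow> 'v \<Rightarrow> 'v) \<Rightarrow> (nat \<Rightarrow> 'v) \<Rightarrow> complex ^ 'd \<Rightarrow> nat \<Rightarrow> nat \<Rightarrow> complex" where
  "adj_entry ends act r z i j =
     (\<Sum>e\<in>{e. fst (ends e) = r i}. \<Sum>s\<in>{s. snd (ends e) = act s (r j)}. monom_eval z s)
   + (\<Sum>e\<in>{e. snd (ends e) = r i}. \<Sum>s\<in>{s. fst (ends e) = act s (r j)}. monom_eval z s)"

definition laplacian_entry ::
  "('e \<Rightarrow> 'v \<times> 'v) \<Rightarrow> (int ^ 'd \<Rightarrow> 'v \<Rightarrow> 'v) \<Rightarrow> (nat \<Rightarrow> 'v) \<Rightarrow> complex ^ 'd \<Rightarrow> nat \<Rightarrow> nat \<Rightarrow> complex" where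
  "laplacian_entry ends act r z i j =
     (if i = j then of_nat (degree_G ends (r i)) else 0) - adj_entry ends act r z i j"

definition Delta0 ::
  "('e \<Rightarrow> 'v \<times> 'v) \<Rightarrow> (int ^ 'd \<Rightarrow> 'v \<Rightarrow> 'v) \<Rightarrow> nat \<Rightarrow> (nat \<Rightarrow> 'v) \<Rightarrow> complex ^ 'd \<Rightarrow> complex" where
  "Delta0 ends act n r z =
     (\<Sum>p | p permutes {..<n}. of_int (sign p) * (\<Prod>i<n. laplacian_entry ends act r z i (p i)))"

definition torus_pt :: "real ^ 'd \<Rightarrow> complex ^ 'd" where
  "torus_pt \<theta> = (\<chi> k. exp (2 * of_real pi * \<i> * of_real (\<theta> $ k)))"

definition mahler :: "(complex ^ 'd \<Rightarrow> complex) \<Rightarrow> real" where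
  "mahler f = (LINT \<theta> : cbox (0 :: real ^ 'd) One | lborel. ln (cmod (f (torus_pt \<theta>))))"

end

theory Submission
  imports Defs "Jordan_Normal_Form.Determinant"
begin

definition hq :: "nat \<Rightarrow> (nat \<Rightarrow> nat \<Rightarrow> complex) \<Rightarrow> (nat \<Rightarrow> complex) \<Rightarrow> complex" where
  "hq n f x = (\<Sum>i<n. \<Sum>j<n. cnj (x i) * f i j * x j)"

definition psd :: "nat \<Rightarrow> (nat \<Rightarrow> nat \<Rightarrow> complex) \<Rightarrow> bool" where
  "psd n f \<longleftrightarrow> (\<forall>i<n. \<forall>j<n. f j i = cnj (f i j)) \<and> (\<forall>x. Im (hq n f x) = 0 \<and> 0 \<le> Re (hq n f x))"

lemma hq_sparse:
  assumes "A \<subseteq> {..<n}" "\<And>k. k \<notin> A \<Longrightarrow> x k = 0"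
  shows "hq n f x = (\<Sum>i\<in>A. \<Sum>j\<in>A. cnj (x i) * f i j * x j)"
proof -
  have fin: "finite A" using assms(1) finite_subset by blast
  have "(\<Sum>j<n. cnj (x i) * f i j * x j) = (\<Sum>j\<in>A. cnj (x i) * f i j * x j)" for i
    by (rule sum.mono_neutral_right) (use assms fin in auto)
  hence "hq n f x = (\<Sum>i<n. \<Sum>j\<in>A. cnj (x i) * f i j * x j)" unfolding hq_def by simp
  also have "\<dots> = (\<Sum>i\<in>A. \<Sum>j\<in>A. cnj (x i) * f i j * x j)"
    by (rule sum.mono_neutral_right) (use assms fin in auto)
  finally show ?thesis .
qed

lemma hq_delta:
  assumes "i < n" shows "hq n f (\<lambda>k. if k = i then 1 else 0) = f i i"
  using assms by (subst hq_sparse[where A="{i}"]) auto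

lemma hq_two:
  assumes "i < n" "j < n" "i \<noteq> j"
  shows "hq n f (\<lambda>k. if k = i then a else if k = j then b else 0) =
     cnj a * f i i * a + cnj a * f i j * b + cnj b * f j i * a + cnj b * f j j * b"
  using assms by (subst hq_sparse[where A="{i,j}"]) (auto simp: algebra_simps)

lemma psd_diag: assumes "psd n f" "i < n" shows "Im (f i i) = 0" "0 \<le> Re (f i i)"
  using assms hq_delta[of i n f] unfolding psd_def by metis+

lemma lin_nonneg_zero: fixes u c :: real assumes "\<And>t. 0 \<le> 2*t*u + c" shows "u = 0"
proof (rule ccontr)
  assume u: "u \<noteq> 0"
  have "0 \<le> 2*(-(\<bar>c\<bar>+1)/(2*u))*u + c" by (rule assms)
  also have "2*(-(\<bar>c\<bar>+1)/(2*u))*u = -(\<bar>c\<bar>+1)" using u by (simp add: field_simps)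
  finally show False by linarith
qed

lemma psd_zero_row: assumes "psd n f" "i < n" "f i i = 0" "j < n" shows "f i j = 0"
proof (cases "j = i")
  case True thus ?thesis using assms by simp
next
  case False
  have herm: "f j i = cnj (f i j)" using assms unfolding psd_def by blast
  have "0 \<le> 2*t*Re (f i j) + Re (f j j)" for t
  proof -
    have "0 \<le> Re (hq n f (\<lambda>k. if k = i then of_real t else if k = j then 1 else 0))"
      using assms(1) unfolding psd_def by blast
    also have "hq n f (\<lambda>k. if k = i then of_real t else if k = j then 1 else 0) =
       cnj (complex_of_real t) * 0 * complex_of_real t + cnj (complex_of_real t) * f i j * 1 + cnj 1 * cnj (f i j) * complex_of_real t + cnj 1 * f j j * 1"
      unfolding hq_two[OF assms(2,4) False[symmetric]] assms(3) herm ..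
    finally show ?thesis by simp
  qed
  hence r: "Re (f i j) = 0" by (rule lin_nonneg_zero)
  have "0 \<le> 2*t*Im (f i j) + Re (f j j)" for t
  proof -
    have "0 \<le> Re (hq n f (\<lambda>k. if k = i then \<i> * of_real t else if k = j then 1 else 0))"
      using assms(1) unfolding psd_def by blast
    also have "hq n f (\<lambda>k. if k = i then \<i> * of_real t else if k = j then 1 else 0) =
       cnj (\<i> * complex_of_real t) * 0 * (\<i> * complex_of_real t) + cnj (\<i> * complex_of_real t) * f i j * 1 + cnj 1 * cnj (f i j) * (\<i> * complex_of_real t) + cnj 1 * f j j * 1"
      unfolding hq_two[OF assms(2,4) False[symmetric]] assms(3) herm ..
    finally show ?thesis by simp
  qed
  hence "Im (f i j) = 0" by (rule lin_nonneg_zero)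
  with r show ?thesis by (simp add: complex_eq_iff)
qed

lemma det_zero_row: assumes "i < n" "\<And>j. j < n \<Longrightarrow> f i j = 0"
  shows "Determinant.det (Matrix.mat n n (\<lambda>(i,j). f i j)) = 0"
proof -
  have "(\<Prod>k = 0..<n. Matrix.mat n n (\<lambda>(i,j). f i j) $$ (k, p k)) = 0" if "p permutes {0..<n}" for p
  proof (rule prod_zero)
    show "\<exists>a\<in>{0..<n}. Matrix.mat n n (\<lambda>(i,j). f i j) $$ (a, p a) = 0"
      using assms that permutes_in_image[OF that, of i] by (intro bexI[of _ i]) auto
  qed auto
  thus ?thesis unfolding Determinant.det_def by simp
qed


lemma sum_elim_row:
  fixes c :: complex and g :: "nat \<Rightarrow> complex"
  assumes "i < N"
  shows "(\<Sum>k\<in>{0..<N}. (if i = k then 1 else if k = 0 then c else 0) * g k) =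
         (if i = 0 then g 0 else g i + c * g 0)"
proof -
  have eq: "(\<lambda>k. (if i = k then 1 else if k = 0 then c else 0) * g k) =
        (\<lambda>k. (if k = i then g i else 0) + (if k = 0 then (if i = 0 then 0 else c * g 0) else 0))"
    by (rule ext) auto
  show ?thesis unfolding eq sum.distrib using assms by (simp add: sum.delta)
qed

lemma schur_det:
  fixes f :: "nat \<Rightarrow> nat \<Rightarrow> complex"
  assumes f0: "f 0 0 \<noteq> 0"
  shows "Determinant.det (Matrix.mat (Suc n) (Suc n) (\<lambda>(i,j). f i j)) =
    f 0 0 * Determinant.det (Matrix.mat n n (\<lambda>(i,j). f (Suc i) (Suc j) - f (Suc i) 0 * f 0 (Suc j) / f 0 0))"
proof -
  define E where "E = Matrix.mat (Suc n) (Suc n) (\<lambda>(i,j). if i = j then (1::complex) else if j = 0 then - f i 0 / f 0 0 else 0)"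
  define A where "A = Matrix.mat (Suc n) (Suc n) (\<lambda>(i,j). f i j)"
  define S where "S = Matrix.mat n n (\<lambda>(i,j). f (Suc i) (Suc j) - f (Suc i) 0 * f 0 (Suc j) / f 0 0)"
  define A1 where "A1 = Matrix.mat 1 1 (\<lambda>_. f 0 0)"
  define A2 where "A2 = Matrix.mat 1 n (\<lambda>(_,j). f 0 (Suc j))"
  have E: "E \<in> carrier_mat (Suc n) (Suc n)" and A: "A \<in> carrier_mat (Suc n) (Suc n)"
    unfolding E_def A_def by auto
  have dE: "Determinant.det E = 1"
  proof -
    have "Determinant.det E = prod_list (diag_mat E)"
      by (rule det_lower_triangular[OF _ E]) (auto simp: E_def)
    also have "diag_mat E = map (\<lambda>_. 1) [0..<Suc n]"
      unfolding diag_mat_def E_def by auto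
    moreover have "prod_list (map (\<lambda>_. 1::complex) xs) = 1" for xs :: "nat list"
      by (induction xs) auto
    ultimately show ?thesis by metis
  qed
  have EA: "E * A = four_block_mat A1 A2 (0\<^sub>m n 1) S"
  proof (rule eq_matI)
    show "dim_row (E * A) = dim_row (four_block_mat A1 A2 (0\<^sub>m n 1) S)"
      by (simp add: E_def A1_def S_def)
    show "dim_col (E * A) = dim_col (four_block_mat A1 A2 (0\<^sub>m n 1) S)"
      by (simp add: A_def A1_def S_def)
    fix i j assume i: "i < dim_row (four_block_mat A1 A2 (0\<^sub>m n 1) S)"
      and j: "j < dim_col (four_block_mat A1 A2 (0\<^sub>m n 1) S)"
    hence i': "i < Suc n" and j': "j < Suc n" by (auto simp: A1_def S_def)
    have "(E * A) $$ (i, j) = (\<Sum>k\<in>{0..<Suc n}. (if i = k then 1 else if k = 0 then - f i 0 / f 0 0 else 0) * f k j)"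
      using i' j' by (simp add: E_def A_def scalar_prod_def)
    also have "\<dots> = (if i = 0 then f 0 j else f i j + (- f i 0 / f 0 0) * f 0 j)"
      by (rule sum_elim_row[OF i'])
    also have "\<dots> = four_block_mat A1 A2 (0\<^sub>m n 1) S $$ (i, j)"
      using i' j' f0 by (cases i; cases j) (auto simp: A1_def A2_def S_def field_simps)
    finally show "(E * A) $$ (i, j) = four_block_mat A1 A2 (0\<^sub>m n 1) S $$ (i, j)" .
  qed
  have "Determinant.det A = Determinant.det (E * A)"
    using det_mult[OF E A] dE by simp
  also have "\<dots> = Determinant.det A1 * Determinant.det S"
    unfolding EA by (rule det_four_block_mat_lower_left_zero_col) (auto simp: A1_def A2_def S_def)
  also have "Determinant.det A1 = f 0 0"
    by (simp add: A1_def det_single)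
  finally show ?thesis unfolding A_def S_def .
qed


lemma psd_herm: "psd n f \<Longrightarrow> i < n \<Longrightarrow> j < n \<Longrightarrow> f j i = cnj (f i j)"
  unfolding psd_def by blast

lemma schur_psd:
  fixes f :: "nat \<Rightarrow> nat \<Rightarrow> complex"
  assumes p: "psd (Suc n) f" and f0: "f 0 0 \<noteq> 0"
  shows "psd n (\<lambda>i j. f (Suc i) (Suc j) - f (Suc i) 0 * f 0 (Suc j) / f 0 0)"
proof -
  define S where "S = (\<lambda>i j. f (Suc i) (Suc j) - f (Suc i) 0 * f 0 (Suc j) / f 0 0)"
  have cf0: "cnj (f 0 0) = f 0 0"
    using psd_diag(1)[OF p, of 0] by (simp add: complex_eq_iff)
  have herm: "\<And>i j. i < Suc n \<Longrightarrow> j < Suc n \<Longrightarrow> f j i = cnj (f i j)"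
    using psd_herm[OF p] by blast
  have hS: "\<forall>i<n. \<forall>j<n. S j i = cnj (S i j)"
  proof (intro allI impI)
    fix i j assume i: "i < n" and j: "j < n"
    have a: "cnj (f (Suc i) (Suc j)) = f (Suc j) (Suc i)" using herm[of "Suc i" "Suc j"] i j by simp
    have b: "cnj (f (Suc i) 0) = f 0 (Suc i)" using herm[of "Suc i" 0] i by simp
    have c: "cnj (f 0 (Suc j)) = f (Suc j) 0" using herm[of 0 "Suc j"] j by simp
    show "S j i = cnj (S i j)" unfolding S_def by (simp add: a b c cf0)
  qed
  have q: "hq n S x = hq (Suc n) f (\<lambda>k. if k = 0 then - (\<Sum>j<n. f 0 (Suc j) * x j) / f 0 0 else x (k - 1))" for x
  proof -
    define a where "a = (\<Sum>j<n. f 0 (Suc j) * x j)"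
    define b where "b = (\<Sum>i<n. cnj (x i) * f (Suc i) 0)"
    define y where "y = (\<lambda>k. if k = 0 then - a / f 0 0 else x (k - 1))"
    have y0: "y 0 = - a / f 0 0" and yS: "\<And>k. y (Suc k) = x k" unfolding y_def by auto
    have ba: "b = cnj a"
    proof -
      have "b = (\<Sum>i<n. cnj (x i) * cnj (f 0 (Suc i)))"
        unfolding b_def
      proof (rule sum.cong)
        fix i assume "i \<in> {..<n}"
        hence "f (Suc i) 0 = cnj (f 0 (Suc i))" using herm[of 0 "Suc i"] by simp
        thus "cnj (x i) * f (Suc i) 0 = cnj (x i) * cnj (f 0 (Suc i))" by simp
      qed simp
      also have "\<dots> = cnj a" unfolding a_def by (simp add: mult.commute)
      finally show ?thesis .
    qed
    have h1: "hq (Suc n) f y = cnj (y 0) * f 0 0 * y 0 + cnj (y 0) * a + b * y 0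
         + (\<Sum>i<n. \<Sum>j<n. cnj (x i) * f (Suc i) (Suc j) * x j)"
    proof -
      have "hq (Suc n) f y = (cnj (y 0) * f 0 0 * y 0 + (\<Sum>j<n. cnj (y 0) * f 0 (Suc j) * x j))
          + (\<Sum>i<n. cnj (x i) * f (Suc i) 0 * y 0 + (\<Sum>j<n. cnj (x i) * f (Suc i) (Suc j) * x j))"
        unfolding hq_def by (simp only: sum.lessThan_Suc_shift yS)
      also have "(\<Sum>j<n. cnj (y 0) * f 0 (Suc j) * x j) = cnj (y 0) * a"
        unfolding a_def by (simp add: sum_distrib_left mult.assoc)
      also have "(\<Sum>i<n. cnj (x i) * f (Suc i) 0 * y 0 + (\<Sum>j<n. cnj (x i) * f (Suc i) (Suc j) * x j))
          = b * y 0 + (\<Sum>i<n. \<Sum>j<n. cnj (x i) * f (Suc i) (Suc j) * x j)"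
        unfolding b_def by (simp add: sum.distrib sum_distrib_right)
      finally show ?thesis by (simp add: algebra_simps)
    qed
    have h2: "hq n S x = (\<Sum>i<n. \<Sum>j<n. cnj (x i) * f (Suc i) (Suc j) * x j) - b * a / f 0 0"
    proof -
      have "b * a = (\<Sum>i<n. \<Sum>j<n. cnj (x i) * f (Suc i) 0 * (f 0 (Suc j) * x j))"
        unfolding a_def b_def by (simp add: sum_product)
      hence "b * a / f 0 0 = (\<Sum>i<n. \<Sum>j<n. cnj (x i) * (f (Suc i) 0 * f 0 (Suc j) / f 0 0) * x j)"
        by (simp add: sum_divide_distrib algebra_simps)
      thus ?thesis unfolding hq_def S_def
        by (simp add: algebra_simps sum_subtractf)
    qed
    have "hq (Suc n) f y = hq n S x"
      unfolding h1 h2 y0 ba using f0 cf0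
      by (simp add: field_simps)
    thus ?thesis unfolding y_def a_def S_def by simp
  qed
  have "\<forall>x. Im (hq n S x) = 0 \<and> 0 \<le> Re (hq n S x)"
    using p unfolding psd_def q by blast
  with hS show ?thesis unfolding psd_def S_def by blast
qed


lemma schur_diag_le:
  fixes f :: "nat \<Rightarrow> nat \<Rightarrow> complex"
  assumes p: "psd (Suc n) f" and i: "i < n"
  shows "Re (f (Suc i) (Suc i) - f (Suc i) 0 * f 0 (Suc i) / f 0 0) \<le> Re (f (Suc i) (Suc i))"
proof -
  define w where "w = f 0 (Suc i)"
  have h: "f (Suc i) 0 = cnj w" unfolding w_def using psd_herm[OF p, of 0 "Suc i"] i by simp
  have f0: "f 0 0 = complex_of_real (Re (f 0 0))"
    using psd_diag(1)[OF p, of 0] by (simp add: complex_eq_iff)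
  have r: "0 \<le> Re (f 0 0)" using psd_diag(2)[OF p, of 0] by simp
  have "f (Suc i) 0 * f 0 (Suc i) / f 0 0 = complex_of_real ((cmod w)^2 / Re (f 0 0))"
  proof -
    have "cnj w * w = complex_of_real ((cmod w)^2)" by (metis complex_norm_square mult.commute of_real_power)
    thus ?thesis unfolding h w_def[symmetric] by (subst f0) simp
  qed
  hence "Re (f (Suc i) 0 * f 0 (Suc i) / f 0 0) \<ge> 0" using r by simp
  thus ?thesis by simp
qed

lemma hadamard:
  fixes f :: "nat \<Rightarrow> nat \<Rightarrow> complex"
  assumes "psd n f"
  shows "cmod (Determinant.det (Matrix.mat n n (\<lambda>(i,j). f i j))) \<le> (\<Prod>i<n. Re (f i i))"
  using assms
proof (induction n arbitrary: f)
  case 0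
  have "Determinant.det (Matrix.mat 0 0 (\<lambda>(i,j). f i j)) = 1" by (rule det_dim_zero) auto
  thus ?case by simp
next
  case (Suc n)
  have nonneg: "0 \<le> (\<Prod>i<Suc n. Re (f i i))"
    by (rule prod_nonneg) (use psd_diag(2)[OF Suc.prems] in auto)
  show ?case
  proof (cases "f 0 0 = 0")
    case True
    have "Determinant.det (Matrix.mat (Suc n) (Suc n) (\<lambda>(i,j). f i j)) = 0"
      by (rule det_zero_row[of 0]) (use psd_zero_row[OF Suc.prems _ True] in auto)
    thus ?thesis using nonneg by simp
  next
    case False
    define S where "S = (\<lambda>i j. f (Suc i) (Suc j) - f (Suc i) 0 * f 0 (Suc j) / f 0 0)"
    have pS: "psd n S" unfolding S_def by (rule schur_psd[OF Suc.prems False])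
    have IH: "cmod (Determinant.det (Matrix.mat n n (\<lambda>(i,j). S i j))) \<le> (\<Prod>i<n. Re (S i i))"
      by (rule Suc.IH[OF pS])
    have d: "Determinant.det (Matrix.mat (Suc n) (Suc n) (\<lambda>(i,j). f i j)) = f 0 0 * Determinant.det (Matrix.mat n n (\<lambda>(i,j). S i j))"
      unfolding S_def by (rule schur_det[where f=f and n=n, OF False])
    have f0: "cmod (f 0 0) = Re (f 0 0)"
      using psd_diag[OF Suc.prems, of 0] by (simp add: cmod_eq_Re)
    have r: "0 \<le> Re (f 0 0)" using psd_diag(2)[OF Suc.prems, of 0] by simp
    have "(\<Prod>i<n. Re (S i i)) \<le> (\<Prod>i<n. Re (f (Suc i) (Suc i)))"
      by (rule prod_mono) (use psd_diag(2)[OF pS] schur_diag_le[OF Suc.prems] in \<open>auto simp: S_def\<close>)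
    hence "cmod (Determinant.det (Matrix.mat n n (\<lambda>(i,j). S i j))) \<le> (\<Prod>i<n. Re (f (Suc i) (Suc i)))"
      using IH by linarith
    hence "Re (f 0 0) * cmod (Determinant.det (Matrix.mat n n (\<lambda>(i,j). S i j))) \<le> Re (f 0 0) * (\<Prod>i<n. Re (f (Suc i) (Suc i)))"
      using r by (rule mult_left_mono)
    thus ?thesis unfolding d norm_mult f0 prod.lessThan_Suc_shift by simp
  qed
qed


lemma lint_le_const:
  fixes g :: "real ^ 'd::finite \<Rightarrow> real"
  assumes "\<And>x. g x \<le> C" "0 \<le> C"
  shows "(LINT x : cbox (0 :: real ^ 'd) One | lborel. g x) \<le> C"
proof (cases "set_integrable lborel (cbox (0 :: real ^ 'd) One) g")
  case True
  have fin: "emeasure lborel (cbox (0 :: real ^ 'd) One) \<noteq> \<infinity>"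
    using emeasure_lborel_cbox_finite by (metis less_irrefl)
  have ci: "set_integrable lborel (cbox (0 :: real ^ 'd) One) (\<lambda>_. C)"
    unfolding set_integrable_def using fin
    by simp
  have "(LINT x : cbox (0 :: real ^ 'd) One | lborel. g x) \<le> (LINT x : cbox (0 :: real ^ 'd) One | lborel. C)"
    by (rule set_integral_mono[OF True ci]) (use assms in auto)
  also have "\<dots> = measure lborel (cbox (0 :: real ^ 'd) One) * C"
    using fin by (simp add: set_integral_const)
  also have "measure lborel (cbox (0 :: real ^ 'd) One) = 1"
    using content_unit by simp
  finally show ?thesis by simp
next
  case False
  hence "(LINT x : cbox (0 :: real ^ 'd) One | lborel. g x) = 0"
    unfolding set_lebesgue_integral_def set_integrable_def by (simp add: not_integrable_integral_eq)
  thus ?thesis using assms by simp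
qed

lemma ln_prod_le:
  fixes d :: "nat \<Rightarrow> real"
  assumes n: "0 < n" and d: "\<And>i. i < n \<Longrightarrow> 0 \<le> d i" and P: "0 < P" "P \<le> (\<Prod>i<n. d i)"
    and T: "(\<Sum>i<n. d i) = T"
  shows "ln P \<le> real n * ln (T / real n)"
proof -
  have dpos: "0 < d i" if "i < n" for i
  proof (rule ccontr)
    assume "\<not> 0 < d i"
    hence "d i = 0" using d[OF that] by simp
    hence "(\<Prod>i<n. d i) = 0" using that by (auto intro!: prod_zero bexI[of _ i])
    thus False using P by linarith
  qed
  have "0 < T" unfolding T[symmetric] using n dpos by (intro sum_pos) auto
  define m where "m = T / real n"
  have m: "0 < m" unfolding m_def using \<open>0 < T\<close> n by simp
  have "ln P \<le> ln (\<Prod>i<n. d i)" using P by simp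
  also have "\<dots> = (\<Sum>i<n. ln (d i))" by (rule ln_prod) (use dpos in fastforce)+
  also have "\<dots> \<le> (\<Sum>i<n. ln m + (d i / m - 1))"
  proof (rule sum_mono)
    fix i assume "i \<in> {..<n}"
    hence di: "0 < d i" using dpos by auto
    have "ln (d i / m) \<le> d i / m - 1" by (rule ln_le_minus_one) (use di m in simp)
    thus "ln (d i) \<le> ln m + (d i / m - 1)" using di m by (simp add: ln_div)
  qed
  also have "\<dots> = real n * ln m + (T / m - real n)"
    unfolding T[symmetric] by (simp add: sum.distrib sum_subtractf sum_divide_distrib[symmetric])
  also have "T / m - real n = 0" unfolding m_def using n \<open>0 < T\<close> by simp
  finally show ?thesis unfolding m_def by simp
qed


lemma ga_basic:
  assumes "free_action act"
  shows "act 0 x = x" "act (s + t) x = act s (act t x)" "act (-s) (act s x) = x" "act s (act (-s) x) = x"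
    and "act s x = act t x \<longleftrightarrow> s = t" "act s x = act s y \<longleftrightarrow> x = y"
proof -
  have g: "act 0 = id" "\<And>s t. act (s + t) = act s \<circ> act t"
    using assms unfolding free_action_def group_action_def by auto
  have fr: "\<And>s x. act s x = x \<Longrightarrow> s = 0" using assms unfolding free_action_def by auto
  show a0: "act 0 x = x" for x using g by simp
  show aa: "act (s + t) x = act s (act t x)" for s t x using g(2)[of s t] by simp
  show an: "act (-s) (act s x) = x" for s x
  proof -
    have "act (-s) (act s x) = act (-s + s) x" by (rule aa[symmetric])
    thus ?thesis using a0 by simp
  qed
  show an2: "act s (act (-s) x) = x" for s x
  proof -
    have "act s (act (-s) x) = act (s + -s) x" by (rule aa[symmetric])
    thus ?thesis using a0 by simp
  qed
  show "act s x = act t x \<longleftrightarrow> s = t"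
  proof
    assume "act s x = act t x"
    hence "act (-t + s) x = x" using aa[of "-t" s x] an[of t x] by simp
    hence "-t + s = 0" by (rule fr)
    thus "s = t" by (simp add: algebra_simps)
  qed simp
  show "act s x = act s y \<longleftrightarrow> x = y"
  proof
    assume "act s x = act s y"
    hence "act (-s) (act s x) = act (-s) (act s y)" by simp
    thus "x = y" unfolding an .
  qed simp
qed

lemma orbit_act:
  assumes "free_action act" shows "orbit act (act s x) = orbit act x"
proof -
  have "orbit act (act s x) = range (\<lambda>t. act (t + s) x)"
    unfolding orbit_def using ga_basic(2)[OF assms] by simp
  also have "\<dots> = range (\<lambda>t. act t x)"
  proof (intro equalityI subsetI)
    fix y assume "y \<in> range (\<lambda>t. act (t + s) x)" thus "y \<in> range (\<lambda>t. act t x)" by blast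
  next
    fix y assume "y \<in> range (\<lambda>t. act t x)"
    then obtain t where "y = act t x" by blast
    hence "y = act ((t - s) + s) x" by simp
    thus "y \<in> range (\<lambda>t. act (t + s) x)" by blast
  qed
  finally show ?thesis unfolding orbit_def .
qed


locale pg =
  fixes ends :: "'e \<Rightarrow> 'v \<times> 'v" and act :: "int ^ 'd::finite \<Rightarrow> 'v \<Rightarrow> 'v"
    and acte :: "int ^ 'd \<Rightarrow> 'e \<Rightarrow> 'e" and r :: "nat \<Rightarrow> 'v"
  assumes lf: "locally_finite ends" and per: "Zd_periodic_graph ends act acte"
    and bij: "bij_betw (\<lambda>i. orbit act (r i)) {..<card (quot act)} (quot act)"
begin

abbreviation "n \<equiv> card (quot act)"

lemma fa: "free_action act" and fae: "free_action acte"
  and aut: "acts_by_automorphisms ends act acte"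
  and finq: "finite (quot act)" and finqe: "finite (quot acte)"
  using per unfolding Zd_periodic_graph_def by auto

lemma npos: "0 < n"
proof -
  have "orbit act undefined \<in> quot act" unfolding quot_def by simp
  thus ?thesis using finq card_gt_0_iff by blast
qed

lemma loc_ex: "\<exists>p. fst p < n \<and> v = act (snd p) (r (fst p))"
proof -
  have "orbit act v \<in> quot act" unfolding quot_def by simp
  then obtain j where j: "j < n" "orbit act (r j) = orbit act v"
    using bij unfolding bij_betw_def by (metis imageE lessThan_iff)
  have "v \<in> orbit act v" unfolding orbit_def using ga_basic(1)[OF fa, of v] by (metis rangeI)
  then obtain s where "v = act s (r j)" using j(2) unfolding orbit_def by auto
  with j show ?thesis by (intro exI[of _ "(j,s)"]) simp
qed

lemma loc_uniq:
  assumes "j < n" "j' < n" "act s (r j) = act s' (r j')"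
  shows "j = j'" "s = s'"
proof -
  have "orbit act (r j) = orbit act (r j')"
    using orbit_act[OF fa, of s "r j"] orbit_act[OF fa, of s' "r j'"] assms(3) by simp
  thus jj: "j = j'" using bij assms(1,2) unfolding bij_betw_def inj_on_def by blast
  show "s = s'" using assms(3) unfolding jj ga_basic(5)[OF fa] .
qed

definition loc :: "'v \<Rightarrow> nat \<times> (int ^ 'd)" where
  "loc v = (SOME p. fst p < n \<and> v = act (snd p) (r (fst p)))"

lemma loc: "fst (loc v) < n" "v = act (snd (loc v)) (r (fst (loc v)))"
  using someI_ex[OF loc_ex[of v]] unfolding loc_def by auto

lemma loc_iff: assumes "j < n" shows "v = act s (r j) \<longleftrightarrow> loc v = (j, s)"
proof
  assume v: "v = act s (r j)"
  have "act (snd (loc v)) (r (fst (loc v))) = act s (r j)" using loc(2)[of v] v by simp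
  from loc_uniq[OF loc(1) assms this] show "loc v = (j, s)" by (simp add: prod_eq_iff)
next
  assume "loc v = (j, s)" thus "v = act s (r j)" using loc(2)[of v] by simp
qed

definition A1 where "A1 u = {e. fst (ends e) = u}"
definition A2 where "A2 u = {e. snd (ends e) = u}"

lemma finA: "finite (A1 u)" "finite (A2 u)"
  using lf unfolding locally_finite_def endpoint_def A1_def A2_def
  by (auto intro: finite_subset[rotated])

lemma fin_ends: "finite {e. ends e = (u, v)}"
  by (rule finite_subset[OF _ finA(1)[of u]]) (auto simp: A1_def)

end

context pg begin

definition Nc where "Nc u v = card {e. ends e = (u, v)}"
definition M where "M u v = Nc u v + Nc v u"
definition U where "U u v = {e. ends e = (u, v) \<or> ends e = (v, u)}"

lemma finU: "finite (U u v)"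
  by (rule finite_subset[OF _ finite_UnI[OF finA(1)[of u] finA(2)[of u]]]) (auto simp: U_def A1_def A2_def)

lemma M_U: "M u v = (if u = v then 2 * card (U u v) else card (U u v))"
proof (cases "u = v")
  case True
  thus ?thesis unfolding M_def Nc_def U_def by simp
next
  case False
  have "U u v = {e. ends e = (u, v)} \<union> {e. ends e = (v, u)}" unfolding U_def by auto
  hence "card (U u v) = Nc u v + Nc v u" unfolding Nc_def
    using False by (simp add: card_Un_disjoint fin_ends disjoint_iff)
  thus ?thesis using False unfolding M_def by simp
qed

lemma U_le: "card (U u v) \<le> card (U (act t u) (act t v))"
proof (rule card_inj_on_le[of "acte t"])
  show "inj_on (acte t) (U u v)" unfolding inj_on_def using ga_basic(6)[OF fae] by blast
  show "finite (U (act t u) (act t v))" by (rule finU)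
  show "acte t ` U u v \<subseteq> U (act t u) (act t v)"
  proof
    fix e' assume "e' \<in> acte t ` U u v"
    then obtain e where e: "e \<in> U u v" "e' = acte t e" by blast
    have "ends (acte t e) = (act t (fst (ends e)), act t (snd (ends e))) \<or>
          ends (acte t e) = (act t (snd (ends e)), act t (fst (ends e)))"
      using aut unfolding acts_by_automorphisms_def by blast
    thus "e' \<in> U (act t u) (act t v)" using e unfolding U_def by auto
  qed
qed

lemma U_shift: "card (U (act t u) (act t v)) = card (U u v)"
proof (rule antisym)
  have "card (U (act t u) (act t v)) \<le> card (U (act (-t) (act t u)) (act (-t) (act t v)))"
    by (rule U_le)
  thus "card (U (act t u) (act t v)) \<le> card (U u v)" unfolding ga_basic(3)[OF fa] .
qed (rule U_le)

lemma M_shift: "M (act t u) (act t v) = M u v"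
  unfolding M_U U_shift ga_basic(6)[OF fa] ..

lemma M_sym: "M u v = M v u" unfolding M_def by simp

definition c :: "nat \<Rightarrow> nat \<Rightarrow> int ^ 'd \<Rightarrow> nat" where "c i j s = M (r i) (act s (r j))"

lemma c_sym: "c j i (-s) = c i j s"
proof -
  have "c j i (-s) = M (act s (r j)) (act s (act (-s) (r i)))"
    unfolding c_def M_shift ..
  also have "\<dots> = M (r i) (act s (r j))" unfolding ga_basic(4)[OF fa] by (rule M_sym)
  finally show ?thesis unfolding c_def .
qed

end

context pg begin

definition S0 where "S0 = (\<lambda>e. snd (loc (snd (ends e)))) ` (\<Union>i<n. A1 (r i)) \<union> (\<lambda>e. snd (loc (fst (ends e)))) ` (\<Union>i<n. A2 (r i))"
definition S where "S = S0 \<union> uminus ` S0"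

lemma finS: "finite S" unfolding S_def S0_def using finA by auto

lemma S_neg: "s \<in> S \<Longrightarrow> -s \<in> S" unfolding S_def by (auto simp: image_iff)

lemma group_lemma:
  fixes \<phi> :: "nat \<times> (int ^ 'd) \<Rightarrow> 'a::comm_semiring_1" and g :: "'e \<Rightarrow> nat \<times> (int ^ 'd)"
  assumes "finite A" "g ` A \<subseteq> {..<n} \<times> S"
  shows "(\<Sum>e\<in>A. \<phi> (g e)) = (\<Sum>j<n. \<Sum>s\<in>S. of_nat (card {e\<in>A. g e = (j, s)}) * \<phi> (j, s))"
proof -
  have "(\<Sum>e\<in>A. \<phi> (g e)) = (\<Sum>p\<in>{..<n} \<times> S. \<Sum>e\<in>{e\<in>A. g e = p}. \<phi> (g e))"
    by (rule sum.group[symmetric]) (use assms finS in auto)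
  also have "\<dots> = (\<Sum>p\<in>{..<n} \<times> S. of_nat (card {e\<in>A. g e = p}) * \<phi> p)"
  proof (rule sum.cong[OF refl])
    fix p
    have "(\<Sum>e\<in>{e\<in>A. g e = p}. \<phi> (g e)) = (\<Sum>e\<in>{e\<in>A. g e = p}. \<phi> p)" by (rule sum.cong) auto
    thus "(\<Sum>e\<in>{e\<in>A. g e = p}. \<phi> (g e)) = of_nat (card {e\<in>A. g e = p}) * \<phi> p" by simp
  qed
  also have "\<dots> = (\<Sum>j<n. \<Sum>s\<in>S. of_nat (card {e\<in>A. g e = (j, s)}) * \<phi> (j, s))"
    by (simp add: sum.cartesian_product)
  finally show ?thesis .
qed

lemma DS:
  fixes \<phi> :: "nat \<times> (int ^ 'd) \<Rightarrow> 'a::comm_semiring_1"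
  assumes i: "i < n"
  shows "(\<Sum>e\<in>A1 (r i). \<phi> (loc (snd (ends e)))) + (\<Sum>e\<in>A2 (r i). \<phi> (loc (fst (ends e))))
     = (\<Sum>j<n. \<Sum>s\<in>S. of_nat (c i j s) * \<phi> (j, s))"
proof -
  have im1: "(\<lambda>e. loc (snd (ends e))) ` A1 (r i) \<subseteq> {..<n} \<times> S"
  proof
    fix p assume "p \<in> (\<lambda>e. loc (snd (ends e))) ` A1 (r i)"
    then obtain e where e: "e \<in> A1 (r i)" "p = loc (snd (ends e))" by blast
    have "snd p \<in> S" unfolding S_def S0_def using e i by blast
    thus "p \<in> {..<n} \<times> S" using loc(1) e by (auto simp: mem_Times_iff)
  qed
  have im2: "(\<lambda>e. loc (fst (ends e))) ` A2 (r i) \<subseteq> {..<n} \<times> S"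
  proof
    fix p assume "p \<in> (\<lambda>e. loc (fst (ends e))) ` A2 (r i)"
    then obtain e where e: "e \<in> A2 (r i)" "p = loc (fst (ends e))" by blast
    have "snd p \<in> S" unfolding S_def S0_def using e i by blast
    thus "p \<in> {..<n} \<times> S" using loc(1) e by (auto simp: mem_Times_iff)
  qed
  have c1: "{e\<in>A1 (r i). loc (snd (ends e)) = (j, s)} = {e. ends e = (r i, act s (r j))}" if "j < n" for j s
    using loc_iff[OF that] unfolding A1_def by (auto simp: prod_eq_iff)
  have c2: "{e\<in>A2 (r i). loc (fst (ends e)) = (j, s)} = {e. ends e = (act s (r j), r i)}" if "j < n" for j s
    using loc_iff[OF that] unfolding A2_def by (auto simp: prod_eq_iff)
  show ?thesis
    unfolding group_lemma[OF finA(1) im1] group_lemma[OF finA(2) im2] sum.distrib[symmetric]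
  proof (intro sum.cong refl)
    fix j s assume "j \<in> {..<n}" "s \<in> S"
    hence jn: "j < n" by simp
    show "of_nat (card {e\<in>A1 (r i). loc (snd (ends e)) = (j, s)}) * \<phi> (j, s) +
          of_nat (card {e\<in>A2 (r i). loc (fst (ends e)) = (j, s)}) * \<phi> (j, s) =
          of_nat (c i j s) * \<phi> (j, s)"
      unfolding c1[OF jn] c2[OF jn] by (simp add: c_def M_def Nc_def algebra_simps)
  qed
qed

lemma degree_c: assumes "i < n" shows "degree_G ends (r i) = (\<Sum>j<n. \<Sum>s\<in>S. c i j s)"
  using DS[OF assms, of "\<lambda>_. (1::nat)"] unfolding degree_G_def A1_def A2_def by simp

lemma adj_c:
  assumes i: "i < n" and j: "j < n"
  shows "adj_entry ends act r z i j = (\<Sum>s\<in>S. of_nat (c i j s) * monom_eval z s)"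
proof -
  define \<phi> where "\<phi> = (\<lambda>p::nat \<times> (int ^ 'd). if fst p = j then monom_eval z (snd p) else 0)"
  have inner: "(\<Sum>s\<in>{s. w = act s (r j)}. monom_eval z s) = \<phi> (loc w)" for w
  proof -
    have "{s. w = act s (r j)} = (if fst (loc w) = j then {snd (loc w)} else {})"
      using loc_iff[OF j, of w] by (auto simp: prod_eq_iff)
    thus ?thesis unfolding \<phi>_def by simp
  qed
  have "adj_entry ends act r z i j = (\<Sum>e\<in>A1 (r i). \<phi> (loc (snd (ends e)))) + (\<Sum>e\<in>A2 (r i). \<phi> (loc (fst (ends e))))"
    unfolding adj_entry_def A1_def A2_def inner ..
  also have "\<dots> = (\<Sum>k<n. \<Sum>s\<in>S. of_nat (c i k s) * \<phi> (k, s))" by (rule DS[OF i])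
  also have "\<dots> = (\<Sum>k<n. if k = j then (\<Sum>s\<in>S. of_nat (c i j s) * monom_eval z s) else 0)"
    by (rule sum.cong) (auto simp: \<phi>_def)
  also have "\<dots> = (\<Sum>s\<in>S. of_nat (c i j s) * monom_eval z s)" using j by simp
  finally show ?thesis .
qed

end

lemma card_Diff_Int_sum: "finite A \<Longrightarrow> card (A - B) + card (A \<inter> B) = card A"
proof -
  assume f: "finite A"
  have "A = (A - B) \<union> (A \<inter> B)" by blast
  hence "card A = card ((A - B) \<union> (A \<inter> B))" by simp
  also have "\<dots> = card (A - B) + card (A \<inter> B)" by (rule card_Un_disjoint) (use f in auto)
  finally show ?thesis by simp
qed

context pg begin

definition R where "R = r ` {..<n}"

lemma inj_r: "inj_on r {..<n}"
  using bij unfolding bij_betw_def inj_on_def by metis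

lemma X_single: "{t. act t a \<in> R} = {- snd (loc a)}"
proof (intro Set.set_eqI iffI)
  fix t assume "t \<in> {t. act t a \<in> R}"
  then obtain j where j: "j < n" "act t a = r j" unfolding R_def by auto
  hence "a = act (-t) (r j)" using ga_basic(3)[OF fa, of t a] by simp
  hence "loc a = (j, -t)" using loc_iff[OF j(1)] by simp
  thus "t \<in> {- snd (loc a)}" by simp
next
  fix t assume "t \<in> {- snd (loc a)}"
  hence t: "t = - snd (loc a)" by simp
  have "act t a = act t (act (snd (loc a)) (r (fst (loc a))))" using loc(2)[of a] by simp
  also have "\<dots> = r (fst (loc a))" unfolding t by (rule ga_basic(3)[OF fa])
  finally show "t \<in> {t. act t a \<in> R}" unfolding R_def using loc(1)[of a] by auto
qed

lemma orbit_count: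
  "card {t. fst (ends (acte t e0)) \<in> R} + card {t. snd (ends (acte t e0)) \<in> R} = 2"
proof -
  define a where "a = fst (ends e0)"
  define b where "b = snd (ends e0)"
  define Xa where "Xa = {t. act t a \<in> R}"
  define Xb where "Xb = {t. act t b \<in> R}"
  define Fl where "Fl = {t. ends (acte t e0) \<noteq> (act t a, act t b)}"
  have fl: "t \<in> Fl \<Longrightarrow> ends (acte t e0) = (act t b, act t a)" for t
  proof -
    assume "t \<in> Fl"
    moreover have "ends (acte t e0) = (act t a, act t b) \<or> ends (acte t e0) = (act t b, act t a)"
      using aut unfolding acts_by_automorphisms_def a_def b_def by blast
    ultimately show ?thesis unfolding Fl_def by blast
  qed
  have nfl: "t \<notin> Fl \<Longrightarrow> ends (acte t e0) = (act t a, act t b)" for t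
    unfolding Fl_def by blast
  have Xa1: "card Xa = 1" and Xb1: "card Xb = 1" and fXa: "finite Xa" and fXb: "finite Xb"
    unfolding Xa_def Xb_def X_single by auto
  have P1: "{t. fst (ends (acte t e0)) \<in> R} = (Xa - Fl) \<union> (Xb \<inter> Fl)"
    unfolding Xa_def Xb_def
  proof (intro Set.set_eqI)
    fix t show "t \<in> {t. fst (ends (acte t e0)) \<in> R} \<longleftrightarrow> t \<in> ({t. act t a \<in> R} - Fl) \<union> ({t. act t b \<in> R} \<inter> Fl)"
      by (cases "t \<in> Fl") (simp_all add: fl nfl)
  qed
  have P2: "{t. snd (ends (acte t e0)) \<in> R} = (Xb - Fl) \<union> (Xa \<inter> Fl)"
    unfolding Xa_def Xb_def
  proof (intro Set.set_eqI)
    fix t show "t \<in> {t. snd (ends (acte t e0)) \<in> R} \<longleftrightarrow> t \<in> ({t. act t b \<in> R} - Fl) \<union> ({t. act t a \<in> R} \<inter> Fl)"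
      by (cases "t \<in> Fl") (simp_all add: fl nfl)
  qed
  have "card {t. fst (ends (acte t e0)) \<in> R} = card (Xa - Fl) + card (Xb \<inter> Fl)"
    unfolding P1 by (rule card_Un_disjoint) (use fXa fXb in auto)
  moreover have "card {t. snd (ends (acte t e0)) \<in> R} = card (Xb - Fl) + card (Xa \<inter> Fl)"
    unfolding P2 by (rule card_Un_disjoint) (use fXa fXb in auto)
  ultimately show ?thesis
    using card_Diff_Int_sum[OF fXa, of Fl] card_Diff_Int_sum[OF fXb, of Fl] Xa1 Xb1 by simp
qed

end

context pg begin

lemma orbit_slice:
  assumes "\<And>e. P e \<longleftrightarrow> Q (ends e)"
  shows "card {e. P e \<and> orbit acte e = orbit acte e0} = card {t. Q (ends (acte t e0))}"
proof -
  have "{e. P e \<and> orbit acte e = orbit acte e0} = (\<lambda>t. acte t e0) ` {t. Q (ends (acte t e0))}"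
  proof (intro Set.set_eqI iffI)
    fix e assume e: "e \<in> {e. P e \<and> orbit acte e = orbit acte e0}"
    have "e \<in> orbit acte e" unfolding orbit_def using ga_basic(1)[OF fae, of e] by (metis rangeI)
    hence "e \<in> orbit acte e0" using e by simp
    then obtain t where t: "e = acte t e0" unfolding orbit_def by auto
    thus "e \<in> (\<lambda>t. acte t e0) ` {t. Q (ends (acte t e0))}" using e assms by auto
  next
    fix e assume "e \<in> (\<lambda>t. acte t e0) ` {t. Q (ends (acte t e0))}"
    then obtain t where t: "e = acte t e0" "Q (ends (acte t e0))" by auto
    thus "e \<in> {e. P e \<and> orbit acte e = orbit acte e0}"
      using assms orbit_act[OF fae, of t e0] by auto
  qed
  also have "card \<dots> = card {t. Q (ends (acte t e0))}"
    by (rule card_image) (auto simp: inj_on_def ga_basic(5)[OF fae])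
  finally show ?thesis .
qed

lemma card_by_orbits:
  assumes "finite X"
  shows "card X = (\<Sum>Ob\<in>quot acte. card {e. e \<in> X \<and> orbit acte e = Ob})"
proof -
  have "card X = (\<Sum>e\<in>X. 1)" by simp
  also have "\<dots> = (\<Sum>Ob\<in>quot acte. \<Sum>e\<in>{e\<in>X. orbit acte e = Ob}. 1)"
    by (rule sum.group[symmetric]) (use assms finqe in \<open>auto simp: quot_def\<close>)
  also have "\<dots> = (\<Sum>Ob\<in>quot acte. card {e. e \<in> X \<and> orbit acte e = Ob})" by simp
  finally show ?thesis .
qed

lemma sum_card_A:
  assumes "\<And>u. finite (B u)" "\<And>u v. u \<noteq> v \<Longrightarrow> B u \<inter> B v = {}"
  shows "(\<Sum>i<n. card (B (r i))) = card (\<Union>i<n. B (r i))"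
proof (rule card_UN_disjoint[symmetric])
  show "\<forall>i\<in>{..<n}. \<forall>j\<in>{..<n}. i \<noteq> j \<longrightarrow> B (r i) \<inter> B (r j) = {}"
    using assms(2) inj_r unfolding inj_on_def by metis
qed (use assms in auto)

lemma trace: "(\<Sum>i<n. degree_G ends (r i)) = 2 * card (quot acte)"
proof -
  define F where "F = {e. fst (ends e) \<in> R}"
  define G where "G = {e. snd (ends e) \<in> R}"
  have F: "(\<Union>i<n. A1 (r i)) = F" unfolding F_def A1_def R_def by auto
  have G: "(\<Union>i<n. A2 (r i)) = G" unfolding G_def A2_def R_def by auto
  have fF: "finite F" unfolding F[symmetric] using finA by auto
  have fG: "finite G" unfolding G[symmetric] using finA by auto
  have "(\<Sum>i<n. degree_G ends (r i)) = (\<Sum>i<n. card (A1 (r i))) + (\<Sum>i<n. card (A2 (r i)))"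
    unfolding degree_G_def A1_def A2_def by (simp add: sum.distrib)
  also have "\<dots> = card F + card G"
  proof -
    have d1: "\<And>u v. u \<noteq> v \<Longrightarrow> A1 u \<inter> A1 v = {}" and d2: "\<And>u v. u \<noteq> v \<Longrightarrow> A2 u \<inter> A2 v = {}"
      by (auto simp: A1_def A2_def)
    have s1: "(\<Sum>i<n. card (A1 (r i))) = card F" using sum_card_A[of A1, OF finA(1) d1] F by simp
    have s2: "(\<Sum>i<n. card (A2 (r i))) = card G" using sum_card_A[of A2, OF finA(2) d2] G by simp
    show ?thesis unfolding s1 s2 ..
  qed
  also have "\<dots> = (\<Sum>Ob\<in>quot acte. card {e. e \<in> F \<and> orbit acte e = Ob} + card {e. e \<in> G \<and> orbit acte e = Ob})"
    unfolding card_by_orbits[OF fF] card_by_orbits[OF fG] sum.distrib ..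
  also have "\<dots> = (\<Sum>Ob\<in>quot acte. 2)"
  proof (rule sum.cong[OF refl])
    fix Ob assume "Ob \<in> quot acte"
    then obtain e0 where hOb: "Ob = orbit acte e0" unfolding quot_def by auto
    have "card {e. e \<in> F \<and> orbit acte e = Ob} = card {t. fst (ends (acte t e0)) \<in> R}"
      unfolding hOb by (rule orbit_slice) (simp add: F_def)
    moreover have "card {e. e \<in> G \<and> orbit acte e = Ob} = card {t. snd (ends (acte t e0)) \<in> R}"
      unfolding hOb by (rule orbit_slice) (simp add: G_def)
    ultimately show "card {e. e \<in> F \<and> orbit acte e = Ob} + card {e. e \<in> G \<and> orbit acte e = Ob} = 2"
      using orbit_count[of e0] by simp
  qed
  finally show ?thesis by simp
qed

end

lemma monom_norm: fixes z :: "complex ^ 'd::finite" assumes "\<And>k. cmod (z $ k) = 1" shows "cmod (monom_eval z s) = 1"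
  unfolding monom_eval_def prod_norm[symmetric] using assms by (simp add: norm_power_int)

lemma monom_cnj: fixes z :: "complex ^ 'd::finite" assumes "\<And>k. cmod (z $ k) = 1" shows "cnj (monom_eval z s) = monom_eval z (-s)"
proof -
  have "cnj ((z $ k) powi (s $ k)) = (z $ k) powi (- (s $ k))" for k
    using assms[of k] by (metis complex_cnj_power_int divide_conv_cnj inverse_eq_divide mult_1
    power_int_inverse power_int_minus)
  thus ?thesis unfolding monom_eval_def cnj_prod by simp
qed

context pg begin

lemma reindex_neg: "(\<Sum>s\<in>S. f (-s)) = (\<Sum>s\<in>S. f s)"
  by (rule sum.reindex_bij_witness[of _ uminus uminus]) (auto simp: S_neg)

definition Lap where "Lap z i j = laplacian_entry ends act r z i j"

lemma Lap_eq: assumes "i < n" "j < n"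
  shows "Lap z i j = (if i = j then of_nat (degree_G ends (r i)) else 0) - (\<Sum>s\<in>S. of_nat (c i j s) * monom_eval z s)"
  unfolding Lap_def laplacian_entry_def adj_c[OF assms] ..

lemma Lap_herm: fixes z :: "complex ^ 'd" assumes i: "i < n" and j: "j < n" and z: "\<And>k. cmod (z $ k) = 1"
  shows "Lap z j i = cnj (Lap z i j)"
proof -
  have "cnj (\<Sum>s\<in>S. of_nat (c i j s) * monom_eval z s) = (\<Sum>s\<in>S. of_nat (c j i (-s)) * monom_eval z (-s))"
    unfolding cnj_sum c_sym by (simp add: monom_cnj[OF z])
  also have "\<dots> = (\<Sum>s\<in>S. of_nat (c j i s) * monom_eval z s)"
    by (rule reindex_neg[where f="\<lambda>s. of_nat (c j i s) * monom_eval z s"])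
  finally show ?thesis unfolding Lap_eq[OF i j] Lap_eq[OF j i] by auto
qed

lemma CS:
  fixes F :: "nat \<Rightarrow> nat \<Rightarrow> int ^ 'd \<Rightarrow> complex"
  shows "(\<Sum>i<n. \<Sum>j<n. \<Sum>s\<in>S. of_nat (c i j s) * F i j s) = (\<Sum>i<n. \<Sum>j<n. \<Sum>s\<in>S. of_nat (c i j s) * F j i (-s))"
proof -
  have "(\<Sum>i<n. \<Sum>j<n. \<Sum>s\<in>S. of_nat (c i j s) * F j i (-s)) = (\<Sum>i<n. \<Sum>j<n. \<Sum>s\<in>S. of_nat (c j i (-s)) * F j i (-s))"
    unfolding c_sym ..
  also have "\<dots> = (\<Sum>i<n. \<Sum>j<n. \<Sum>s\<in>S. of_nat (c j i s) * F j i s)"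
  proof (rule sum.cong[OF refl])
    fix i show "(\<Sum>j<n. \<Sum>s\<in>S. of_nat (c j i (-s)) * F j i (-s)) = (\<Sum>j<n. \<Sum>s\<in>S. of_nat (c j i s) * F j i s)"
    proof (rule sum.cong[OF refl])
      fix j show "(\<Sum>s\<in>S. of_nat (c j i (-s)) * F j i (-s)) = (\<Sum>s\<in>S. of_nat (c j i s) * F j i s)"
        by (rule reindex_neg[where f="\<lambda>s. of_nat (c j i s) * F j i s"])
    qed
  qed
  also have "\<dots> = (\<Sum>j<n. \<Sum>i<n. \<Sum>s\<in>S. of_nat (c j i s) * F j i s)"
    by (rule sum.swap)
  finally show ?thesis ..
qed

lemma Lap_quad: fixes z :: "complex ^ 'd" assumes z: "\<And>k. cmod (z $ k) = 1"
  shows "hq n (Lap z) x = of_real ((\<Sum>i<n. \<Sum>j<n. \<Sum>s\<in>S. real (c i j s) * (cmod (x i - monom_eval z s * x j))^2) / 2)"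
proof -
  define G where "G = (\<lambda>i j s. cnj (x i) * x i - cnj (x i) * monom_eval z s * x j)"
  have row: "(\<Sum>j<n. cnj (x i) * Lap z i j * x j) = (\<Sum>j<n. \<Sum>s\<in>S. of_nat (c i j s) * G i j s)" if i: "i < n" for i
  proof -
    have "(\<Sum>j<n. cnj (x i) * Lap z i j * x j) =
        (\<Sum>j<n. (if i = j then cnj (x i) * of_nat (degree_G ends (r i)) * x i else 0))
        - (\<Sum>j<n. cnj (x i) * (\<Sum>s\<in>S. of_nat (c i j s) * monom_eval z s) * x j)"
      unfolding sum_subtractf[symmetric]
      by (rule sum.cong) (auto simp: Lap_eq[OF i] algebra_simps)
    also have "(\<Sum>j<n. (if i = j then cnj (x i) * of_nat (degree_G ends (r i)) * x i else 0))
       = (\<Sum>j<n. \<Sum>s\<in>S. of_nat (c i j s) * (cnj (x i) * x i))"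
      using i unfolding degree_c[OF i] by (simp add: sum_distrib_left sum_distrib_right algebra_simps)
    also have "(\<Sum>j<n. cnj (x i) * (\<Sum>s\<in>S. of_nat (c i j s) * monom_eval z s) * x j)
       = (\<Sum>j<n. \<Sum>s\<in>S. of_nat (c i j s) * (cnj (x i) * monom_eval z s * x j))"
      by (simp add: sum_distrib_right sum_distrib_left algebra_simps)
    finally show ?thesis unfolding G_def by (simp add: sum_subtractf algebra_simps)
  qed
  have Q1: "hq n (Lap z) x = (\<Sum>i<n. \<Sum>j<n. \<Sum>s\<in>S. of_nat (c i j s) * G i j s)"
    unfolding hq_def by (rule sum.cong) (auto simp: row)
  have Q2: "hq n (Lap z) x = (\<Sum>i<n. \<Sum>j<n. \<Sum>s\<in>S. of_nat (c i j s) * G j i (-s))"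
    unfolding Q1 by (rule CS)
  have GG: "G i j s + G j i (-s) = of_real ((cmod (x i - monom_eval z s * x j))^2)" for i j s
  proof -
    define w where "w = monom_eval z s"
    have w1: "cnj w * w = 1" unfolding w_def using monom_norm[OF z, of s]
      by (metis complex_norm_square mult.commute norm_one of_real_1 power_one)
    have "monom_eval z (-s) = cnj w" unfolding w_def by (simp add: monom_cnj[OF z])
    hence "G i j s + G j i (-s) = cnj (x i) * x i - cnj (x i) * w * x j + (cnj (x j) * x j - cnj (x j) * cnj w * x i)"
      unfolding G_def w_def by simp
    also have "\<dots> = (x i - w * x j) * cnj (x i - w * x j)"
      using w1 by (simp add: algebra_simps)
    also have "\<dots> = of_real ((cmod (x i - w * x j))^2)" by (metis complex_norm_square of_real_power)
    finally show ?thesis unfolding w_def .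
  qed
  have "2 * hq n (Lap z) x = hq n (Lap z) x + hq n (Lap z) x" by simp
  also have "\<dots> = (\<Sum>i<n. \<Sum>j<n. \<Sum>s\<in>S. of_nat (c i j s) * G i j s) + (\<Sum>i<n. \<Sum>j<n. \<Sum>s\<in>S. of_nat (c i j s) * G j i (-s))"
    by (subst (1) Q1, subst (1) Q2) (rule refl)
  also have "\<dots> = (\<Sum>i<n. \<Sum>j<n. \<Sum>s\<in>S. of_nat (c i j s) * (G i j s + G j i (-s)))"
    by (simp add: sum.distrib distrib_left)
  also have "\<dots> = of_real (\<Sum>i<n. \<Sum>j<n. \<Sum>s\<in>S. real (c i j s) * (cmod (x i - monom_eval z s * x j))^2)"
    unfolding GG by simp
  finally show ?thesis by (simp add: field_simps)
qed

lemma Lap_psd: fixes z :: "complex ^ 'd" assumes z: "\<And>k. cmod (z $ k) = 1" shows "psd n (Lap z)"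
  unfolding psd_def
proof (intro conjI allI impI)
  fix i j assume "i < n" "j < n" thus "Lap z j i = cnj (Lap z i j)" by (rule Lap_herm[OF _ _ z])
next
  fix x show "Im (hq n (Lap z) x) = 0" unfolding Lap_quad[OF z] by simp
next
  fix x show "0 \<le> Re (hq n (Lap z) x)" unfolding Lap_quad[OF z]
    by (simp add: sum_nonneg)
qed

end

lemma monom_add: fixes z :: "complex ^ 'd::finite" assumes "\<And>k. z $ k \<noteq> 0"
  shows "monom_eval z (s + t) = monom_eval z s * monom_eval z t"
  unfolding monom_eval_def prod.distrib[symmetric] using assms by (simp add: power_int_add)

lemma monom_zero: fixes z :: "complex ^ 'd::finite" shows "monom_eval z 0 = 1"
  unfolding monom_eval_def by simp

lemma monom_axis: fixes z :: "complex ^ 'd::finite" shows "monom_eval z (axis k 1) = z $ k"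
proof -
  have "(z $ k') powi (axis k 1 $ k') = (if k' = k then z $ k else 1)" for k'
    by (simp add: axis_def)
  thus ?thesis unfolding monom_eval_def by (simp add: prod.delta)
qed

context pg begin

lemma c_pos_S: assumes i: "i < n" and j: "j < n" and c: "0 < c i j s" shows "s \<in> S"
proof -
  have "0 < Nc (r i) (act s (r j)) \<or> 0 < Nc (act s (r j)) (r i)" using c unfolding c_def M_def by simp
  thus ?thesis
  proof
    assume "0 < Nc (r i) (act s (r j))"
    then obtain e where e: "ends e = (r i, act s (r j))" unfolding Nc_def by (metis (mono_tags) card.empty empty_Collect_eq less_irrefl)
    hence "e \<in> A1 (r i)" unfolding A1_def by simp
    moreover have "loc (snd (ends e)) = (j, s)" using e loc_iff[OF j, of "act s (r j)" s] by simp
    ultimately show ?thesis unfolding S_def S0_def using i by (auto intro!: imageI bexI[of _ e] simp: image_iff)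
  next
    assume "0 < Nc (act s (r j)) (r i)"
    then obtain e where e: "ends e = (act s (r j), r i)" unfolding Nc_def by (metis (mono_tags) card.empty empty_Collect_eq less_irrefl)
    hence "e \<in> A2 (r i)" unfolding A2_def by simp
    moreover have "loc (fst (ends e)) = (j, s)" using e loc_iff[OF j, of "act s (r j)" s] by simp
    ultimately show ?thesis unfolding S_def S0_def using i by (auto intro!: imageI bexI[of _ e] simp: image_iff)
  qed
qed

end

context pg begin

lemma locr: "j < n \<Longrightarrow> loc (r j) = (j, 0)"
  using loc_iff[of j "r j" 0] ga_basic(1)[OF fa] by simp

lemma det_zero_one:
  fixes z :: "complex ^ 'd"
  assumes conn: "graph_connected ends" and z: "\<And>k. cmod (z $ k) = 1"
    and d: "Determinant.det (Matrix.mat n n (\<lambda>(i,j). Lap z i j)) = 0"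
  shows "z $ k = 1"
proof -
  obtain v where v: "v \<in> carrier_vec n" "v \<noteq> 0\<^sub>v n" "Matrix.mat n n (\<lambda>(i,j). Lap z i j) *\<^sub>v v = 0\<^sub>v n"
    using d det_0_iff_vec_prod_zero[of "Matrix.mat n n (\<lambda>(i,j). Lap z i j)" n] by auto
  define x where "x = (\<lambda>i. vec_index v i)"
  have dv: "dim_vec v = n" using v(1) by simp
  have row0: "(\<Sum>j<n. Lap z i j * x j) = 0" if i: "i < n" for i
  proof -
    have "vec_index (Matrix.mat n n (\<lambda>(i,j). Lap z i j) *\<^sub>v v) i = 0" using v(3) i by simp
    hence "(\<Sum>j\<in>{0..<n}. Lap z i j * x j) = 0" using i dv by (simp add: scalar_prod_def x_def)
    thus ?thesis by (simp add: atLeast0LessThan)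
  qed
  have "hq n (Lap z) x = (\<Sum>i<n. cnj (x i) * (\<Sum>j<n. Lap z i j * x j))"
    unfolding hq_def by (simp add: sum_distrib_left mult.assoc)
  also have "\<dots> = 0" using row0 by simp
  finally have H: "hq n (Lap z) x = 0" .
  define W where "W = (\<Sum>i<n. \<Sum>j<n. \<Sum>s\<in>S. real (c i j s) * (cmod (x i - monom_eval z s * x j))^2)"
  have "complex_of_real (W / 2) = 0" using Lap_quad[OF z, of x] H unfolding W_def by metis
  hence "W / 2 = 0" by (rule of_real_eq_0_iff[THEN iffD1])
  hence W0: "(\<Sum>i<n. \<Sum>j<n. \<Sum>s\<in>S. real (c i j s) * (cmod (x i - monom_eval z s * x j))^2) = 0"
    unfolding W_def by simp
  have eq: "x i = monom_eval z s * x j" if "i < n" "j < n" "0 < c i j s" for i j s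
  proof -
    have sS: "s \<in> S" by (rule c_pos_S[OF that])
    have nn: "\<And>i j s. 0 \<le> real (c i j s) * (cmod (x i - monom_eval z s * x j))^2" by simp
    have "(\<Sum>j<n. \<Sum>s\<in>S. real (c i j s) * (cmod (x i - monom_eval z s * x j))^2) = 0"
      using W0 that(1) by (subst (asm) sum_nonneg_eq_0_iff) (auto intro!: sum_nonneg simp: nn)
    hence "(\<Sum>s\<in>S. real (c i j s) * (cmod (x i - monom_eval z s * x j))^2) = 0"
      using that(2) by (subst (asm) sum_nonneg_eq_0_iff) (auto intro!: sum_nonneg simp: nn)
    hence "real (c i j s) * (cmod (x i - monom_eval z s * x j))^2 = 0"
      using sS finS by (subst (asm) sum_nonneg_eq_0_iff) (auto simp: nn)
    thus ?thesis using that(3) by simp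
  qed
  have znz: "\<And>k. z $ k \<noteq> 0" using z by (metis norm_zero zero_neq_one)
  define Y where "Y = (\<lambda>w. monom_eval z (snd (loc w)) * x (fst (loc w)))"
  have edgeY: "Y u = Y w" if e: "ends e = (u, w)" for e u w
  proof -
    obtain i a where ia: "loc u = (i, a)" by (cases "loc u")
    obtain j b where jb: "loc w = (j, b)" by (cases "loc w")
    have i: "i < n" and j: "j < n" using loc(1)[of u] loc(1)[of w] ia jb by auto
    have u: "u = act a (r i)" using loc(2)[of u] ia by simp
    have w: "w = act b (r j)" using loc(2)[of w] jb by simp
    have "c i j (-a + b) = M (act (-a) u) (act (-a) w)"
      unfolding c_def u w ga_basic(3)[OF fa] ga_basic(2)[OF fa] ..
    also have "\<dots> = M u w" by (rule M_shift)
    finally have "c i j (-a + b) = M u w" .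
    moreover have "0 < Nc u w" unfolding Nc_def using e fin_ends[of u w] by (auto simp: card_gt_0_iff)
    ultimately have "0 < c i j (-a + b)" unfolding M_def by simp
    hence "x i = monom_eval z (-a + b) * x j" by (rule eq[OF i j])
    hence "Y u = monom_eval z a * (monom_eval z (-a + b) * x j)" unfolding Y_def ia by simp
    also have "\<dots> = monom_eval z (a + (-a + b)) * x j" unfolding monom_add[OF znz] by simp
    also have "\<dots> = Y w" unfolding Y_def jb by simp
    finally show ?thesis .
  qed
  have adjY: "adjacent ends u w \<Longrightarrow> Y u = Y w" for u w
    unfolding adjacent_def using edgeY by metis
  have pathY: "(adjacent ends)\<^sup>*\<^sup>* u w \<Longrightarrow> Y u = Y w" for u w
    by (induction rule: rtranclp_induct) (auto dest: adjY)
  have n0: "0 < n" by (rule npos)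
  have allY: "Y w = x 0" for w
  proof -
    have "Y (r 0) = Y w" using conn pathY unfolding graph_connected_def by blast
    thus ?thesis unfolding Y_def locr[OF n0] by (simp add: monom_zero)
  qed
  have xj: "x j = x 0" if "j < n" for j
    using allY[of "r j"] unfolding Y_def locr[OF that] by (simp add: monom_zero)
  have "\<exists>j<n. x j \<noteq> 0"
  proof (rule ccontr)
    assume "\<not> (\<exists>j<n. x j \<noteq> 0)"
    hence "v = 0\<^sub>v n" using dv unfolding x_def by (intro eq_vecI) auto
    with v(2) show False by simp
  qed
  hence x0: "x 0 \<noteq> 0" using xj by auto
  have "Y (act (axis k 1) (r 0)) = monom_eval z (axis k 1) * x 0"
    unfolding Y_def using loc_iff[OF n0, of "act (axis k 1) (r 0)" "axis k 1"] by simp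
  hence "monom_eval z (axis k 1) * x 0 = x 0" using allY by simp
  hence "monom_eval z (axis k 1) = 1" using x0 by simp
  thus ?thesis unfolding monom_axis .
qed

end

lemma integral_lborel_prod:
  fixes f :: "'a::euclidean_space \<Rightarrow> real \<Rightarrow> complex"
  assumes int: "\<And>b. b \<in> Basis \<Longrightarrow> integrable lborel (f b)"
    and meas: "\<And>b. b \<in> Basis \<Longrightarrow> f b \<in> borel_measurable borel"
  shows "(\<integral>x. (\<Prod>b\<in>Basis. f b (x \<bullet> b)) \<partial>(lborel::'a measure)) = (\<Prod>b\<in>Basis. integral\<^sup>L lborel (f b))"
proof -
  interpret product_sigma_finite "\<lambda>b::'a. lborel::real measure"
    by (simp add: product_sigma_finite_def lborel.sigma_finite_measure_axioms)
  have m1: "(\<lambda>g. \<Sum>b\<in>Basis. g b *\<^sub>R b) \<in> Pi\<^sub>M Basis (\<lambda>b::'a. lborel::real measure) \<rightarrow>\<^sub>M (borel :: 'a measure)"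
    by measurable
  have m2: "(\<lambda>x::'a. \<Prod>b\<in>Basis. f b (x \<bullet> b)) \<in> borel_measurable borel"
  proof (rule borel_measurable_prod)
    fix b :: 'a assume b: "b \<in> Basis"
    have "(\<lambda>x::'a. x \<bullet> b) \<in> borel_measurable borel" by measurable
    thus "(\<lambda>x::'a. f b (x \<bullet> b)) \<in> borel_measurable borel" by (rule measurable_compose[OF _ meas[OF b]])
  qed
  have "(\<integral>x. (\<Prod>b\<in>Basis. f b (x \<bullet> b)) \<partial>(lborel::'a measure))
      = (\<integral>g. (\<Prod>b\<in>Basis. f b ((\<Sum>b'\<in>Basis. g b' *\<^sub>R b') \<bullet> b)) \<partial>Pi\<^sub>M Basis (\<lambda>b. lborel))"
    by (subst lborel_eq[where 'a='a]) (rule integral_distr[OF m1 m2])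
  also have "\<dots> = (\<integral>g. (\<Prod>b\<in>Basis. f b (g b)) \<partial>Pi\<^sub>M Basis (\<lambda>b. lborel))"
    by (rule Bochner_Integration.integral_cong[OF refl]) (simp add: inner_sum_left_Basis)
  also have "\<dots> = (\<Prod>b\<in>Basis. integral\<^sup>L lborel (f b))"
    by (rule product_integral_prod) (auto intro: int)
  finally show ?thesis .
qed


lemma exp_2pi_int: "exp (2 * of_real pi * \<i> * of_int m) = (1::complex)"
proof -
  have "exp (complex_of_real (2 * real_of_int m * pi) * \<i>) = 1" by (rule exp_integer_2pi) simp
  moreover have "complex_of_real (2 * real_of_int m * pi) * \<i> = 2 * of_real pi * \<i> * of_int m" by simp
  ultimately show ?thesis by (simp add: mult_ac)
qed

lemma int01_exp:
  fixes m :: int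
  shows "(LINT t : {0..1} | lborel. exp (2 * of_real pi * \<i> * of_int m * of_real t)) = (if m = 0 then 1 else (0::complex))"
proof (cases "m = 0")
  case True
  have "(LINT t : {0..1} | lborel. exp (2 * of_real pi * \<i> * of_int m * of_real t)) = (LINT t : {0..1::real} | lborel. (1::complex))"
    using True by simp
  also have "\<dots> = 1" by (simp add: set_integral_const)
  finally show ?thesis using True by simp
next
  case False
  define c where "c = 2 * of_real pi * \<i> * (of_int m :: complex)"
  have c0: "c \<noteq> 0" unfolding c_def using False by simp
  have si: "set_integrable lborel {0..1::real} (\<lambda>t. exp (c * of_real t))"
    unfolding set_integrable_def by (rule borel_integrable_compact) (auto intro!: continuous_intros)
  have "(LINT t : {0..1} | lborel. exp (2 * of_real pi * \<i> * of_int m * of_real t)) = (LINT t : {0..1} | lborel. exp (c * of_real t))"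
    unfolding c_def ..
  also have "\<dots> = integral {0..1} (\<lambda>t. exp (c * of_real t))"
    by (rule set_borel_integral_eq_integral(2)[OF si])
  also have "\<dots> = (exp (c * of_real 1) - 1) / c" by (rule integral_exp) (use c0 in auto)
  also have "\<dots> = 0" using exp_2pi_int[of m] unfolding c_def by simp
  finally show ?thesis using False by simp
qed


definition Ef :: "int \<Rightarrow> real \<Rightarrow> complex" where
  "Ef m t = exp (2 * of_real pi * \<i> * of_int m * of_real t)"

lemma prod_Basis_vec:
  fixes h :: "real ^ 'd::finite \<Rightarrow> 'b::comm_monoid_mult"
  shows "(\<Prod>b\<in>Basis. h b) = (\<Prod>k\<in>UNIV. h (axis k 1))"
proof -
  have B: "(Basis :: (real^'d) set) = range (\<lambda>k. axis k 1)" by (auto simp: Basis_vec_def)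
  have inj: "inj (\<lambda>k::'d. axis k (1::real))" by (auto simp: inj_on_def axis_eq_axis)
  show ?thesis unfolding B by (subst prod.reindex[OF inj]) simp
qed

lemma monom_torus_basis:
  fixes \<theta> :: "real ^ 'd::finite"
  shows "monom_eval (torus_pt \<theta>) s = (\<Prod>b\<in>Basis. Ef (s $ axis_index b) (\<theta> \<bullet> b))"
proof -
  have "monom_eval (torus_pt \<theta>) s = (\<Prod>k\<in>UNIV. Ef (s $ k) (\<theta> $ k))"
    unfolding monom_eval_def torus_pt_def Ef_def
    by (intro prod.cong refl) (simp add: exp_power_int mult_ac)
  also have "\<dots> = (\<Prod>b\<in>Basis. Ef (s $ axis_index b) (\<theta> \<bullet> b))"
    unfolding prod_Basis_vec[where h="\<lambda>b. Ef (s $ axis_index b) (\<theta> \<bullet> b)"]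
    by (simp add: axis_index_axis cart_eq_inner_axis)
  finally show ?thesis .
qed

lemma indicator_cube:
  fixes \<theta> :: "real ^ 'd::finite"
  shows "indicator (cbox 0 One) \<theta> = (\<Prod>b\<in>Basis. indicator {0..1::real} (\<theta> \<bullet> b) :: real)"
  by (auto simp: mem_box inner_sum_Basis indicator_def prod_zero_iff)

lemma cube_monom:
  fixes s :: "int ^ 'd::finite"
  shows "(LINT \<theta> : cbox (0::real^'d) One | lborel. monom_eval (torus_pt \<theta>) s) = (if s = 0 then 1 else 0)"
proof -
  define f where "f = (\<lambda>(b::real^'d) t. indicator {0..1::real} t *\<^sub>R Ef (s $ axis_index b) t)"
  have fint: "integrable lborel (f b)" for b
    unfolding f_def Ef_def by (rule borel_integrable_compact) (auto intro!: continuous_intros)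
  have eqf: "indicator (cbox 0 One) \<theta> *\<^sub>R monom_eval (torus_pt \<theta>) s = (\<Prod>b\<in>Basis. f b (\<theta> \<bullet> b))" for \<theta> :: "real^'d"
    unfolding indicator_cube monom_torus_basis f_def scaleR_conv_of_real
    by (simp add: prod.distrib)
  have "(LINT \<theta> : cbox (0::real^'d) One | lborel. monom_eval (torus_pt \<theta>) s) = (\<integral>\<theta>. (\<Prod>b\<in>Basis. f b (\<theta> \<bullet> b)) \<partial>lborel)"
    unfolding set_lebesgue_integral_def eqf ..
  also have "\<dots> = (\<Prod>b\<in>Basis. integral\<^sup>L lborel (f b))"
  proof (rule integral_lborel_prod)
    fix b :: "real^'d"
    show "integrable lborel (f b)" by (rule fint)
    show "f b \<in> borel_measurable borel"
      using borel_measurable_integrable[OF fint[of b]] by (simp add: measurable_lborel1)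
  qed
  also have "\<dots> = (\<Prod>b\<in>(Basis :: (real^'d) set). (if s $ axis_index b = 0 then 1 else 0 :: complex))"
  proof (rule prod.cong[OF refl])
    fix b :: "real^'d"
    have "integral\<^sup>L lborel (f b) = (LINT t : {0..1} | lborel. exp (2 * of_real pi * \<i> * of_int (s $ axis_index b) * of_real t))"
      unfolding f_def Ef_def set_lebesgue_integral_def ..
    thus "integral\<^sup>L lborel (f b) = (if s $ axis_index b = 0 then 1 else 0)" unfolding int01_exp .
  qed
  also have "\<dots> = (if s = 0 then 1 else 0)"
  proof (cases "s = 0")
    case True thus ?thesis by simp
  next
    case False
    then obtain k :: 'd where k: "s $ k \<noteq> 0" using Finite_Cartesian_Product.vec_eq_iff[of s 0] by auto
    have "axis k (1::real) \<in> Basis" by (simp add: Basis_vec_def) blast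
    hence "(\<Prod>b\<in>(Basis :: (real^'d) set). (if s $ axis_index b = 0 then 1 else 0 :: complex)) = (0::complex)"
      using k by (intro prod_zero bexI[of _ "axis k 1"]) (auto simp: axis_index_axis)
    thus ?thesis using False by simp
  qed
  finally show ?thesis .
qed


lemma set_int_sum:
  fixes f :: "'i \<Rightarrow> 'a \<Rightarrow> real"
  assumes "finite I" "\<And>i. i \<in> I \<Longrightarrow> set_integrable M A (f i)"
  shows "set_integrable M A (\<lambda>x. \<Sum>i\<in>I. f i x) \<and> (LINT x:A|M. (\<Sum>i\<in>I. f i x)) = (\<Sum>i\<in>I. LINT x:A|M. f i x)"
  using assms
proof (induction I rule: finite_induct)
  case empty
  thus ?case by (simp add: set_integrable_def set_lebesgue_integral_def)
next
  case (insert i I)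
  have a: "set_integrable M A (f i)" using insert by simp
  have b: "set_integrable M A (\<lambda>x. \<Sum>i\<in>I. f i x)" and e: "(LINT x:A|M. (\<Sum>i\<in>I. f i x)) = (\<Sum>i\<in>I. LINT x:A|M. f i x)"
    using insert by auto
  show ?case using insert(1,2) set_integral_add[OF a b] e by simp
qed

lemma monom_torus_fun:
  "(\<lambda>\<theta>::real^'d::finite. monom_eval (torus_pt \<theta>) s) = (\<lambda>\<theta>. \<Prod>b\<in>Basis. Ef (s $ axis_index b) (\<theta> \<bullet> b))"
  by (rule ext) (rule monom_torus_basis)

lemma cont_monom: "continuous_on X (\<lambda>\<theta>::real^'d::finite. monom_eval (torus_pt \<theta>) s)"
  unfolding monom_torus_fun Ef_def by (intro continuous_intros)

lemma si_Re_monom: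
  fixes s :: "int ^ 'd::finite"
  shows "set_integrable lborel (cbox (0::real^'d) One) (\<lambda>\<theta>. Re (monom_eval (torus_pt \<theta>) s))"
    and "(LINT \<theta> : cbox (0::real^'d) One | lborel. Re (monom_eval (torus_pt \<theta>) s)) = (if s = 0 then 1 else 0)"
proof -
  have ci: "integrable lborel (\<lambda>\<theta>::real^'d. indicator (cbox 0 One) \<theta> *\<^sub>R monom_eval (torus_pt \<theta>) s)"
    by (rule borel_integrable_compact) (auto intro: cont_monom)
  have eq: "(\<lambda>\<theta>::real^'d. indicator (cbox 0 One) \<theta> *\<^sub>R Re (monom_eval (torus_pt \<theta>) s)) =
      (\<lambda>\<theta>. Re (indicator (cbox 0 One) \<theta> *\<^sub>R monom_eval (torus_pt \<theta>) s))" by auto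
  show "set_integrable lborel (cbox (0::real^'d) One) (\<lambda>\<theta>. Re (monom_eval (torus_pt \<theta>) s))"
    unfolding set_integrable_def eq using ci by (rule integrable_Re)
  have "(LINT \<theta> : cbox (0::real^'d) One | lborel. Re (monom_eval (torus_pt \<theta>) s)) =
      Re (LINT \<theta> : cbox (0::real^'d) One | lborel. monom_eval (torus_pt \<theta>) s)"
    unfolding set_lebesgue_integral_def eq using integral_Re[OF ci] by simp
  also have "\<dots> = (if s = 0 then 1 else 0)" unfolding cube_monom by simp
  finally show "(LINT \<theta> : cbox (0::real^'d) One | lborel. Re (monom_eval (torus_pt \<theta>) s)) = (if s = 0 then 1 else 0)" .
qed


lemma ln_prod_le2:
  fixes d :: "nat \<Rightarrow> real"
  assumes d: "\<And>i. i < n \<Longrightarrow> 0 \<le> d i" and P: "0 < P" "P \<le> (\<Prod>i<n. d i)" and m: "0 < m"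
  shows "ln P \<le> real n * ln m + (\<Sum>i<n. d i) / m - real n"
proof -
  have dpos: "0 < d i" if "i < n" for i
  proof (rule ccontr)
    assume "\<not> 0 < d i"
    hence "d i = 0" using d[OF that] by simp
    hence "(\<Prod>i<n. d i) = 0" using that by (auto intro!: prod_zero bexI[of _ i])
    thus False using P by linarith
  qed
  have "ln P \<le> ln (\<Prod>i<n. d i)" using P by simp
  also have "\<dots> = (\<Sum>i<n. ln (d i))" by (rule ln_prod) (use dpos in fastforce)+
  also have "\<dots> \<le> (\<Sum>i<n. ln m + (d i / m - 1))"
  proof (rule sum_mono)
    fix i assume "i \<in> {..<n}"
    hence di: "0 < d i" using dpos by auto
    have "ln (d i / m) \<le> d i / m - 1" by (rule ln_le_minus_one) (use di m in simp)
    thus "ln (d i) \<le> ln m + (d i / m - 1)" using di m by (simp add: ln_div)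
  qed
  also have "\<dots> = real n * ln m + (\<Sum>i<n. d i) / m - real n"
    by (simp add: sum.distrib sum_subtractf sum_divide_distrib[symmetric])
  finally show ?thesis .
qed

lemma torus_norm: fixes \<theta> :: "real ^ 'd::finite" shows "cmod (torus_pt \<theta> $ k) = 1"
  unfolding torus_pt_def by simp

lemma torus_one_int: fixes \<theta> :: "real ^ 'd::finite"
  assumes "torus_pt \<theta> $ k = 1" shows "\<theta> $ k \<in> \<int>"
proof -
  have "exp (2 * of_real pi * \<i> * of_real (\<theta> $ k)) = 1" using assms unfolding torus_pt_def by simp
  then obtain j :: int where "Im (2 * of_real pi * \<i> * of_real (\<theta> $ k)) = real_of_int (2 * j) * pi"
    unfolding exp_eq_1 by blast
  hence "\<theta> $ k = j" by simp
  thus ?thesis by simp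
qed

context pg begin

lemma deg_pos:
  assumes conn: "graph_connected ends" and i: "i < n"
  shows "1 \<le> degree_G ends (r i)"
proof -
  define t where "t = (1 :: int ^ 'd)"
  have t0: "t \<noteq> 0" unfolding t_def by (simp add: Finite_Cartesian_Product.vec_eq_iff)
  have ne: "r i \<noteq> act t (r i)"
  proof
    assume "r i = act t (r i)"
    hence "act t (r i) = act 0 (r i)" using ga_basic(1)[OF fa] by simp
    hence "t = 0" unfolding ga_basic(5)[OF fa] .
    with t0 show False ..
  qed
  have "(adjacent ends)\<^sup>*\<^sup>* (r i) (act t (r i))" using conn unfolding graph_connected_def by blast
  then obtain y where "adjacent ends (r i) y" using ne by (metis converse_rtranclpE)
  then obtain e where e: "ends e = (r i, y) \<or> ends e = (y, r i)" unfolding adjacent_def by blast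
  thus ?thesis
  proof
    assume "ends e = (r i, y)"
    hence "e \<in> A1 (r i)" unfolding A1_def by simp
    hence "0 < card (A1 (r i))" using finA(1) card_gt_0_iff by blast
    thus ?thesis unfolding degree_G_def A1_def by simp
  next
    assume "ends e = (y, r i)"
    hence "e \<in> A2 (r i)" unfolding A2_def by simp
    hence "0 < card (A2 (r i))" using finA(2) card_gt_0_iff by blast
    thus ?thesis unfolding degree_G_def A2_def by simp
  qed
qed

lemma Delta0_det: "Delta0 ends act n r z = Determinant.det (Matrix.mat n n (\<lambda>(i,j). Lap z i j))"
proof -
  have "Determinant.det (Matrix.mat n n (\<lambda>(i,j). Lap z i j)) =
     (\<Sum>p \<in> {p. p permutes {0..<n}}. signof p * (\<Prod>i=0..<n. Lap z i (p i)))"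
    by (subst det_def'[where n=n]) (auto intro!: sum.cong prod.cong simp: permutes_def)
  thus ?thesis unfolding Delta0_def Lap_def by (simp add: atLeast0LessThan)
qed

end

context pg begin

lemma Re_Lap_diag: fixes z :: "complex ^ 'd" assumes i: "i < n"
  shows "Re (Lap z i i) = real (degree_G ends (r i)) - (\<Sum>s\<in>S. real (c i i s) * Re (monom_eval z s))"
  unfolding Lap_eq[OF i i] by (simp add: Re_sum)

theorem main_pg:
  assumes conn: "graph_connected ends"
  shows "mahler (Delta0 ends act n r) \<le> real n * ln (2 * real (card (quot acte)) / real n)"
proof -
  define E2 where "E2 = 2 * real (card (quot acte))"
  define m where "m = E2 / real n"
  have n0: "0 < n" by (rule npos)
  have tr: "(\<Sum>i<n. real (degree_G ends (r i))) = E2"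
    unfolding E2_def using arg_cong[OF trace, of real] by simp
  have "real n = (\<Sum>i<n. 1::real)" by simp
  also have "\<dots> \<le> (\<Sum>i<n. real (degree_G ends (r i)))"
    by (rule sum_mono) (use deg_pos[OF conn] in force)
  finally have Ege: "real n \<le> E2" unfolding tr .
  have m1: "1 \<le> m" unfolding m_def using Ege n0 by simp
  have mpos: "0 < m" using m1 by simp
  have Em: "E2 / m = real n" unfolding m_def using n0 Ege by simp
  define C where "C = real n * ln m"
  have C0: "0 \<le> C" unfolding C_def using m1 by simp
  define A where "A = (\<lambda>\<theta>::real^'d. \<Sum>i<n. \<Sum>s\<in>S. real (c i i s) * Re (monom_eval (torus_pt \<theta>) s))"
  define h where "h = (\<lambda>\<theta>. C - A \<theta> / m)"
  define \<phi> where "\<phi> = (\<lambda>\<theta>::real^'d. ln (cmod (Delta0 ends act n r (torus_pt \<theta>))))"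
  have point: "\<phi> \<theta> \<le> h \<theta>" if box: "\<theta> \<in> box 0 One" for \<theta>
  proof -
    define z where "z = torus_pt \<theta>"
    have z: "\<And>k. cmod (z $ k) = 1" unfolding z_def by (rule torus_norm)
    have p: "psd n (Lap z)" by (rule Lap_psd[OF z])
    have det0: "Determinant.det (Matrix.mat n n (\<lambda>(i,j). Lap z i j)) \<noteq> 0"
    proof
      assume "Determinant.det (Matrix.mat n n (\<lambda>(i,j). Lap z i j)) = 0"
      hence "z $ k = 1" for k by (rule det_zero_one[OF conn z])
      hence "\<theta> $ k \<in> \<int>" for k unfolding z_def by (rule torus_one_int)
      moreover have "0 < \<theta> $ k \<and> \<theta> $ k < 1" for k
      proof -
        have b: "axis k (1::real) \<in> Basis" by (simp add: Basis_vec_def) blast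
        note H = box[unfolded mem_box]
        from bspec[OF H b] show ?thesis using b by (simp add: inner_sum_Basis cart_eq_inner_axis)
      qed
      ultimately show False
      proof -
        fix k :: 'd
        obtain j :: int where j: "\<theta> $ k = of_int j" using \<open>\<And>k. \<theta> $ k \<in> \<int>\<close>[of k] by (auto elim: Ints_cases)
        have "0 < \<theta> $ k \<and> \<theta> $ k < 1" by fact
        hence "0 < j \<and> j < 1" unfolding j by simp
        thus False by presburger
      qed
    qed
    define d where "d = (\<lambda>i. Re (Lap z i i))"
    have dnn: "\<And>i. i < n \<Longrightarrow> 0 \<le> d i" unfolding d_def using psd_diag(2)[OF p] .
    have had: "cmod (Determinant.det (Matrix.mat n n (\<lambda>(i,j). Lap z i j))) \<le> (\<Prod>i<n. d i)"
      unfolding d_def by (rule hadamard[OF p])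
    have sumd: "(\<Sum>i<n. d i) = E2 - A \<theta>"
    proof -
      have "(\<Sum>i<n. d i) = (\<Sum>i<n. real (degree_G ends (r i)) - (\<Sum>s\<in>S. real (c i i s) * Re (monom_eval z s)))"
        by (rule sum.cong) (simp_all add: d_def Re_Lap_diag)
      thus ?thesis unfolding A_def z_def tr[symmetric] by (simp add: sum_subtractf)
    qed
    have "\<phi> \<theta> \<le> real n * ln m + (\<Sum>i<n. d i) / m - real n"
      unfolding \<phi>_def z_def[symmetric] Delta0_det
      by (rule ln_prod_le2[OF dnn _ had mpos]) (use det0 in auto)
    also have "\<dots> = h \<theta>" unfolding h_def C_def sumd diff_divide_distrib Em by simp
    finally show ?thesis .
  qed
  have siRe: "set_integrable lborel (cbox (0::real^'d) One) (\<lambda>\<theta>. Re (monom_eval (torus_pt \<theta>) s))" for s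
    by (rule si_Re_monom(1))
  have sA: "set_integrable lborel (cbox (0::real^'d) One) A \<and>
      (LINT \<theta> : cbox (0::real^'d) One | lborel. A \<theta>) = (\<Sum>i<n. \<Sum>s\<in>S. LINT \<theta> : cbox (0::real^'d) One | lborel. real (c i i s) * Re (monom_eval (torus_pt \<theta>) s))"
  proof -
    have inner: "set_integrable lborel (cbox (0::real^'d) One) (\<lambda>\<theta>. \<Sum>s\<in>S. real (c i i s) * Re (monom_eval (torus_pt \<theta>) s)) \<and>
       (LINT \<theta> : cbox (0::real^'d) One | lborel. (\<Sum>s\<in>S. real (c i i s) * Re (monom_eval (torus_pt \<theta>) s))) =
       (\<Sum>s\<in>S. LINT \<theta> : cbox (0::real^'d) One | lborel. real (c i i s) * Re (monom_eval (torus_pt \<theta>) s))" for i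
      by (rule set_int_sum[OF finS]) (use siRe in auto)
    have "set_integrable lborel (cbox (0::real^'d) One) (\<lambda>\<theta>. \<Sum>i<n. \<Sum>s\<in>S. real (c i i s) * Re (monom_eval (torus_pt \<theta>) s)) \<and>
       (LINT \<theta> : cbox (0::real^'d) One | lborel. (\<Sum>i<n. \<Sum>s\<in>S. real (c i i s) * Re (monom_eval (torus_pt \<theta>) s))) =
       (\<Sum>i<n. LINT \<theta> : cbox (0::real^'d) One | lborel. (\<Sum>s\<in>S. real (c i i s) * Re (monom_eval (torus_pt \<theta>) s)))"
      by (rule set_int_sum) (use inner in auto)
    thus ?thesis unfolding A_def using inner by simp
  qed
  have intA: "0 \<le> (LINT \<theta> : cbox (0::real^'d) One | lborel. A \<theta>)"
    unfolding sA[THEN conjunct2] by (simp add: si_Re_monom(2) sum_nonneg)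
  have fin: "emeasure lborel (cbox (0 :: real ^ 'd) One) \<noteq> \<infinity>"
    using emeasure_lborel_cbox_finite by (metis less_irrefl)
  have sC: "set_integrable lborel (cbox (0::real^'d) One) (\<lambda>_. C)"
    unfolding set_integrable_def by simp
  have sh: "set_integrable lborel (cbox (0::real^'d) One) h"
    unfolding h_def using sA sC by (intro set_integral_diff(1)) auto
  have meas1: "measure lborel (cbox (0 :: real ^ 'd) One) = 1" using content_unit by simp
  have inth: "(LINT \<theta> : cbox (0::real^'d) One | lborel. h \<theta>) \<le> C"
  proof -
    have "(LINT \<theta> : cbox (0::real^'d) One | lborel. h \<theta>) = C - (LINT \<theta> : cbox (0::real^'d) One | lborel. A \<theta>) / m"
      unfolding h_def using sA sC fin meas1 by (subst set_integral_diff(2)) (auto simp: set_integral_const)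
    thus ?thesis using intA mpos by (simp add: divide_nonneg_pos)
  qed
  have "mahler (Delta0 ends act n r) = (LINT \<theta> : cbox (0::real^'d) One | lborel. \<phi> \<theta>)"
    unfolding mahler_def \<phi>_def ..
  also have "\<dots> \<le> C"
  proof (cases "set_integrable lborel (cbox (0::real^'d) One) \<phi>")
    case True
    have ae: "AE \<theta> \<in> cbox (0::real^'d) One in lborel. \<phi> \<theta> \<le> h \<theta>"
    proof (rule AE_I'[OF null_sets_cbox_Diff_box[of "0::real^'d" One]])
      show "{x \<in> space lborel. \<not> (x \<in> cbox 0 One \<longrightarrow> \<phi> x \<le> h x)} \<subseteq> cbox 0 One - box 0 One"
        using point by auto
    qed
    have "(LINT \<theta> : cbox (0::real^'d) One | lborel. \<phi> \<theta>) \<le> (LINT \<theta> : cbox (0::real^'d) One | lborel. h \<theta>)"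
      by (rule set_integral_mono_AE[OF True sh ae])
    thus ?thesis using inth by linarith
  next
    case False
    hence "(LINT \<theta> : cbox (0::real^'d) One | lborel. \<phi> \<theta>) = 0"
      unfolding set_lebesgue_integral_def set_integrable_def by (simp add: not_integrable_integral_eq)
    thus ?thesis using C0 by simp
  qed
  finally show ?thesis unfolding C_def m_def E2_def .
qed

end


theorem mainTheorem10:
  fixes ends :: "'e \<Rightarrow> 'v \<times> 'v"
    and act :: "int ^ 'd::finite \<Rightarrow> 'v \<Rightarrow> 'v"
    and acte :: "int ^ 'd \<Rightarrow> 'e \<Rightarrow> 'e"
    and r :: "nat \<Rightarrow> 'v"
  assumes "locally_finite ends"
    and "graph_connected ends"
    and "Zd_periodic_graph ends act acte"
    and "bij_betw (\<lambda>i. orbit act (r i)) {..<card (quot act)} (quot act)"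
  shows "mahler (Delta0 ends act (card (quot act)) r)
           \<le> real (card (quot act)) * ln (2 * real (card (quot acte)) / real (card (quot act)))"
proof -
  interpret pg ends act acte r using assms(1,3,4) by unfold_locales
  show ?thesis by (rule main_pg[OF assms(2)])
qed

end
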